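(* Assume $n$ is sufficiently large and $2\le r<\sqrt[5]{\ln n}$. Let $H=(V,E)$ be an $n$-uniform hypergraph with $|E|\le 0.01\left(\frac{n}{\ln n}\right)^{\frac{r-1}{r}}r^{n-1}$, and let the weights $\sigma(v)$, $v\in V$, be independent and uniform on $[0,1)$. For $i=1,\dots,r-1$ let $X(i)$ be the number of vertices in $\delta_i$ that receive color $i+1$ in the coloring $C^0$ produced by Algorithm 1. Then (i) $\mathbb{E}X(i)\le 0.04e\cdot\frac{n}{r\ln n}$ for every $i=1,\dots,r-1$; (ii) with probability at least $1-0.04e$, $X(i)\le\frac{n}{\ln n}$ holds for every $i=1,\dots,r-1$.
   Context: Colors are $\{1,\dots,r\}$. Put $p=\frac{r-1}{r}\cdot\frac{\ln(n/\ln n)}{n}$. Partition $[0,1)$ into consecutive half-open intervals $\Delta_1,\delta_1,\Delta_2,\dots,\delta_{r-1},\Delta_r$ (left to right), $\Delta_i=\big[(i-1)(\tfrac{1-p}{r}+\tfrac{p}{r-1}),\ i\tfrac{1-p}{r}+(i-1)\tfrac{p}{r-1}\big)$, $\delta_i=\big[i\tfrac{1-p}{r}+(i-1)\tfrac{p}{r-1},\ i(\tfrac{1-p}{r}+\tfrac{p}{r-1})\big)$. A vertex $v$ belongs to interval $I$ if $\sigma(v)\in I$. Algorithm 1 (for injective $\sigma$, which holds almost surely): every vertex in $\Delta_i$ gets color $i$; then the vertices in $\bigcup_i\delta_i$ are processed in increasing order of weight, and $v\in\delta_i$ gets color $i$ unless some edge containing $v$ has all its other vertices already colored $i$, in which case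 $v$ gets color $i+1$. The resulting coloring is $C^0$. *)

theory Defs
  imports "HOL-Probability.Probability"
begin

definition pval :: "nat \<Rightarrow> nat \<Rightarrow> real" where
  "pval n r = (real r - 1) / real r * ln (real n / ln (real n)) / real n"

definition BigDelta :: "nat \<Rightarrow> nat \<Rightarrow> nat \<Rightarrow> real set" where
  "BigDelta n r i = (let p = pval n r in
     {(real i - 1) * ((1 - p) / real r + p / (real r - 1)) ..<
       real i * (1 - p) / real r + (real i - 1) * p / (real r - 1)})"

definition SmallDelta :: "nat \<Rightarrow> nat \<Rightarrow> nat \<Rightarrow> real set" where
  "SmallDelta n r i = (let p = pval n r in
     {real i * (1 - p) / real r + (real i - 1) * p / (real r - 1) ..<
       real i * ((1 - p) / real r + p / (real r - 1))})"

text \<open>A vertex in some Delta_i gets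
  colour i; a vertex v in delta_i gets colour i+1 iff some edge containing v has all its
  other vertices already coloured i, where "already coloured" means lying in some Delta_j
  (coloured in the first phase) or being a delta-vertex of smaller weight (processed
  earlier). Colour 0 marks vertices with weight outside [0,1) (a null event).\<close>
fun alg1_iter :: "nat \<Rightarrow> nat \<Rightarrow> 'a set set \<Rightarrow> ('a \<Rightarrow> real) \<Rightarrow> nat \<Rightarrow> 'a \<Rightarrow> nat" where
  "alg1_iter n r E \<sigma> 0 v = 0"
| "alg1_iter n r E \<sigma> (Suc k) v =
     (if \<exists>i\<in>{1..r}. \<sigma> v \<in> BigDelta n r i
      then (LEAST i. i \<in> {1..r} \<and> \<sigma> v \<in> BigDelta n r i)
      else if \<exists>i\<in>{1..<r}. \<sigma> v \<in> SmallDelta n r i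
      then (let i = (LEAST i. i \<in> {1..<r} \<and> \<sigma> v \<in> SmallDelta n r i) in
            if \<exists>e\<in>E. v \<in> e \<and>
                 (\<forall>u\<in>e - {v}. ((\<exists>j\<in>{1..r}. \<sigma> u \<in> BigDelta n r j) \<or> \<sigma> u < \<sigma> v)
                                 \<and> alg1_iter n r E \<sigma> k u = i)
            then i + 1 else i)
      else 0)"

text \<open>The colouring C^0; depth card V + 1 suffices for the recursion to stabilise
  (chains of strictly increasing weights in V have length at most card V).\<close>
definition C0 :: "nat \<Rightarrow> nat \<Rightarrow> 'a set \<Rightarrow> 'a set set \<Rightarrow> ('a \<Rightarrow> real) \<Rightarrow> 'a \<Rightarrow> nat" where
  "C0 n r V E \<sigma> v = alg1_iter n r E \<sigma> (Suc (card V)) v"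

definition Xcnt :: "nat \<Rightarrow> nat \<Rightarrow> 'a set \<Rightarrow> 'a set set \<Rightarrow> nat \<Rightarrow> ('a \<Rightarrow> real) \<Rightarrow> nat" where
  "Xcnt n r V E i \<sigma> = card {v \<in> V. \<sigma> v \<in> SmallDelta n r i \<and> C0 n r V E \<sigma> v = i + 1}"

definition weight_space :: "'a set \<Rightarrow> ('a \<Rightarrow> real) measure" where
  "weight_space V = PiM V (\<lambda>_. uniform_measure lborel {0..<1})"

end

theory Submission
  imports Defs "HOL-Real_Asymp.Real_Asymp"
begin

definition bb :: "nat \<Rightarrow> nat \<Rightarrow> real" where "bb n r = (1 - pval n r) / real r"
definition qq :: "nat \<Rightarrow> nat \<Rightarrow> real" where "qq n r = pval n r / (real r - 1)"
definition DD :: "nat \<Rightarrow> nat \<Rightarrow> real" where "DD n r = bb n r + qq n r"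
definition ss :: "nat \<Rightarrow> nat \<Rightarrow> nat \<Rightarrow> real" where "ss n r i = (real i - 1) * DD n r"

lemma BigDelta_eq: "BigDelta n r i = {ss n r i ..< ss n r i + bb n r}"
  unfolding BigDelta_def ss_def DD_def bb_def qq_def Let_def
  by (simp add: algebra_simps add_divide_distrib diff_divide_distrib)

lemma SmallDelta_eq: "SmallDelta n r i = {ss n r i + bb n r ..< ss n r i + DD n r}"
  unfolding SmallDelta_def ss_def DD_def bb_def qq_def Let_def
  by (simp add: algebra_simps add_divide_distrib diff_divide_distrib)

definition okp :: "nat \<Rightarrow> nat \<Rightarrow> bool" where
  "okp n r \<longleftrightarrow> 2 \<le> r \<and> 0 < pval n r \<and> pval n r < 1/2"

lemma okp_pos: assumes "okp n r" shows "0 < bb n r" "0 < qq n r" "bb n r < DD n r"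
  using assms unfolding okp_def bb_def qq_def DD_def by auto

lemma ss_diff: "ss n r j = ss n r i + (real j - real i) * DD n r"
  unfolding ss_def by (simp add: algebra_simps)

lemma big_big: assumes "okp n r" "x \<in> BigDelta n r i" "x \<in> BigDelta n r j" shows "i = j"
proof (rule ccontr)
  assume "i \<noteq> j"
  then consider "i < j" | "j < i" by linarith
  then show False
  proof cases
    case 1
    then have "real j - real i \<ge> 1" by linarith
    then have "(real j - real i) * DD n r \<ge> DD n r" using okp_pos[OF assms(1)]
      by (metis mult_le_cancel_right1 order_less_le order_less_le_trans)
    moreover have "ss n r i \<le> x" "x < ss n r i + bb n r" "ss n r j \<le> x" using assms by (auto simp: BigDelta_eq)
    ultimately show False using okp_pos[OF assms(1)] ss_diff[of n r j i] by linarith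
  next
    case 2
    then have "real i - real j \<ge> 1" by linarith
    then have "(real i - real j) * DD n r \<ge> DD n r" using okp_pos[OF assms(1)]
      by (metis mult_le_cancel_right1 order_less_le order_less_le_trans)
    moreover have "ss n r j \<le> x" "x < ss n r j + bb n r" "ss n r i \<le> x" using assms by (auto simp: BigDelta_eq)
    ultimately show False using okp_pos[OF assms(1)] ss_diff[of n r i j] by linarith
  qed
qed

lemma small_small: assumes "okp n r" "x \<in> SmallDelta n r i" "x \<in> SmallDelta n r j" shows "i = j"
proof (rule ccontr)
  assume "i \<noteq> j"
  then consider "i < j" | "j < i" by linarith
  then show False
  proof cases
    case 1
    then have "real j - real i \<ge> 1" by linarith
    then have "(real j - real i) * DD n r \<ge> DD n r" using okp_pos[OF assms(1)]
      by (metis mult_le_cancel_right1 order_less_le order_less_le_trans)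
    moreover have "x < ss n r i + DD n r" "ss n r j + bb n r \<le> x" using assms by (auto simp: SmallDelta_eq)
    ultimately show False using okp_pos[OF assms(1)] ss_diff[of n r j i] by linarith
  next
    case 2
    then have "real i - real j \<ge> 1" by linarith
    then have "(real i - real j) * DD n r \<ge> DD n r" using okp_pos[OF assms(1)]
      by (metis mult_le_cancel_right1 order_less_le order_less_le_trans)
    moreover have "x < ss n r j + DD n r" "ss n r i + bb n r \<le> x" using assms by (auto simp: SmallDelta_eq)
    ultimately show False using okp_pos[OF assms(1)] ss_diff[of n r i j] by linarith
  qed
qed

lemma big_small: assumes "okp n r" "x \<in> BigDelta n r i" "x \<in> SmallDelta n r j" shows False
proof (cases "i \<le> j")
  case True
  then have "real j - real i \<ge> 0" by linarith
  then have "(real j - real i) * DD n r \<ge> 0" using okp_pos[OF assms(1)] by simp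
  moreover have "x < ss n r i + bb n r" "ss n r j + bb n r \<le> x" using assms by (auto simp: SmallDelta_eq BigDelta_eq)
  ultimately show False using okp_pos[OF assms(1)] ss_diff[of n r j i] by linarith
next
  case False
  then have "real i - real j \<ge> 1" by linarith
  then have "(real i - real j) * DD n r \<ge> DD n r" using okp_pos[OF assms(1)]
    by (metis mult_le_cancel_right1 order_less_le order_less_le_trans)
  moreover have "ss n r i \<le> x" "x < ss n r j + DD n r" using assms by (auto simp: SmallDelta_eq BigDelta_eq)
  ultimately show False using okp_pos[OF assms(1)] ss_diff[of n r i j] by linarith
qed

lemma small_lt: assumes "okp n r" "x \<in> SmallDelta n r i" "y \<in> SmallDelta n r j" "i < j" shows "x < y"
proof -
  have "real j - real i \<ge> 1" using assms by linarith
  then have "(real j - real i) * DD n r \<ge> DD n r" using okp_pos[OF assms(1)]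
    by (metis mult_le_cancel_right1 order_less_le order_less_le_trans)
  moreover have "x < ss n r i + DD n r" "ss n r j + bb n r \<le> y" using assms by (auto simp: SmallDelta_eq)
  ultimately show ?thesis using okp_pos[OF assms(1)] ss_diff[of n r j i] by linarith
qed

lemma Least_big: assumes "okp n r" "i \<in> {1..r}" "\<sigma> v \<in> BigDelta n r i"
  shows "(LEAST i. i \<in> {1..r} \<and> \<sigma> v \<in> BigDelta n r i) = i"
  by (rule Least_equality) (use assms big_big[OF assms(1)] in force)+

lemma Least_small: assumes "okp n r" "i \<in> {1..<r}" "\<sigma> v \<in> SmallDelta n r i"
  shows "(LEAST i. i \<in> {1..<r} \<and> \<sigma> v \<in> SmallDelta n r i) = i"
  by (rule Least_equality) (use assms small_small[OF assms(1)] in force)+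

lemma colour_pos:
  assumes "okp n r" "alg1_iter n r E \<sigma> k u = c" "1 \<le> c"
  shows "(\<sigma> u \<in> BigDelta n r c \<and> c \<le> r) \<or> (\<sigma> u \<in> SmallDelta n r c \<and> c < r)
       \<or> (\<sigma> u \<in> SmallDelta n r (c - 1) \<and> 2 \<le> c \<and> c - 1 < r)"
proof (cases k)
  case 0 then show ?thesis using assms by simp
next
  case (Suc k')
  show ?thesis
  proof (cases "\<exists>i\<in>{1..r}. \<sigma> u \<in> BigDelta n r i")
    case True
    then obtain i where i: "i \<in> {1..r}" "\<sigma> u \<in> BigDelta n r i" by blast
    have "c = i" using assms(2) True Least_big[where \<sigma>=\<sigma> and v=u, OF assms(1) i] Suc by simp
    then show ?thesis using i by auto
  next
    case False
    note F = False
    show ?thesis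
    proof (cases "\<exists>i\<in>{1..<r}. \<sigma> u \<in> SmallDelta n r i")
      case True
      then obtain i where i: "i \<in> {1..<r}" "\<sigma> u \<in> SmallDelta n r i" by blast
      have "c = i \<or> c = i + 1" using assms(2) F True Least_small[where \<sigma>=\<sigma> and v=u, OF assms(1) i] Suc
        by (auto simp: Let_def split: if_splits)
      then show ?thesis using i by auto
    next
      case False
      then show ?thesis using assms F Suc by simp
    qed
  qed
qed

lemma unfold_small:
  assumes "okp n r" "i \<in> {1..<r}" "\<sigma> v \<in> SmallDelta n r i"
  shows "alg1_iter n r E \<sigma> (Suc k) v =
     (if \<exists>e\<in>E. v \<in> e \<and>
                 (\<forall>u\<in>e - {v}. ((\<exists>j\<in>{1..r}. \<sigma> u \<in> BigDelta n r j) \<or> \<sigma> u < \<sigma> v)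
                                 \<and> alg1_iter n r E \<sigma> k u = i)
            then i + 1 else i)"
proof -
  have nb: "\<not> (\<exists>i\<in>{1..r}. \<sigma> v \<in> BigDelta n r i)" using big_small assms by blast
  have "\<exists>i\<in>{1..<r}. \<sigma> v \<in> SmallDelta n r i" using assms by blast
  then show ?thesis using nb Least_small[where \<sigma>=\<sigma> and v=v, OF assms] by (simp add: Let_def)
qed

definition uu :: "(nat \<Rightarrow> 'a set) \<Rightarrow> 'a \<Rightarrow> nat \<Rightarrow> 'a" where
  "uu es v j = (if j = 0 then v else (SOME u. u \<in> es (j - 1) \<inter> es j))"

definition chainev :: "nat \<Rightarrow> nat \<Rightarrow> 'a set set \<Rightarrow> nat \<Rightarrow> nat \<Rightarrow> (nat \<Rightarrow> 'a set) \<Rightarrow> 'a \<Rightarrow> ('a \<Rightarrow> real) \<Rightarrow> bool" where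
  "chainev n r E i k es v \<sigma> \<longleftrightarrow>
     (\<forall>j\<le>k. es j \<in> E \<and> uu es v j \<in> es j \<and> \<sigma> (uu es v j) \<in> SmallDelta n r (i - j)) \<and>
     (\<forall>j<k. uu es v (Suc j) \<in> es j \<and>
        (\<forall>w\<in>es j - {uu es v j}. \<sigma> (uu es v (Suc j)) \<le> \<sigma> w \<and> \<sigma> w < \<sigma> (uu es v j))) \<and>
     (\<forall>w\<in>es k - {uu es v k}. ss n r (i - k) \<le> \<sigma> w \<and> \<sigma> w < \<sigma> (uu es v k))"

lemma small_below_ss: "okp n r \<Longrightarrow> 1 \<le> i \<Longrightarrow> x \<in> SmallDelta n r (i - 1) \<Longrightarrow> x < ss n r i"
  using ss_diff[of n r i "i - 1"] by (auto simp: SmallDelta_eq of_nat_diff)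

lemma big_ge_ss: "x \<in> BigDelta n r i \<Longrightarrow> ss n r i \<le> x"
  by (auto simp: BigDelta_eq)

lemma small_ge_ss: "okp n r \<Longrightarrow> x \<in> SmallDelta n r i \<Longrightarrow> ss n r i \<le> x"
  using okp_pos[of n r] by (auto simp: SmallDelta_eq)

lemma big_lt_small: "okp n r \<Longrightarrow> x \<in> BigDelta n r i \<Longrightarrow> y \<in> SmallDelta n r i \<Longrightarrow> x < y"
  by (auto simp: SmallDelta_eq BigDelta_eq)

lemma chain_first_inter:
  assumes "chainev n r E i k es v \<sigma>"
  shows "v \<in> es 0" "\<forall>w\<in>es 0 - {v}. \<sigma> w < \<sigma> v"
proof -
  have u0: "uu es v 0 = v" by (simp add: uu_def)
  show "v \<in> es 0" using assms u0 unfolding chainev_def by (metis le0)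
  show "\<forall>w\<in>es 0 - {v}. \<sigma> w < \<sigma> v"
  proof (cases k)
    case 0 then show ?thesis using assms u0 unfolding chainev_def by auto
  next
    case (Suc k') then show ?thesis using assms u0 unfolding chainev_def by (metis zero_less_Suc)
  qed
qed

lemma witness:
  assumes ok: "okp n r" and fin: "\<forall>e\<in>E. finite e"
  shows "1 \<le> i \<Longrightarrow> i < r \<Longrightarrow> \<sigma> v \<in> SmallDelta n r i \<Longrightarrow> alg1_iter n r E \<sigma> k0 v = i + 1
          \<Longrightarrow> \<exists>k<i. \<exists>es. chainev n r E i k es v \<sigma>"
proof (induction i arbitrary: v k0)
  case 0 then show ?case by simp
next
  case (Suc i0)
  define i where "i = Suc i0"
  have i1: "1 \<le> i" "i < r" and vs: "\<sigma> v \<in> SmallDelta n r i" and col: "alg1_iter n r E \<sigma> k0 v = i + 1"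
    using Suc.prems by (auto simp: i_def)
  obtain k where k0: "k0 = Suc k" using col by (cases k0) auto
  have iin: "i \<in> {1..<r}" using i1 by auto
  have "\<exists>e\<in>E. v \<in> e \<and> (\<forall>u\<in>e - {v}. ((\<exists>j\<in>{1..r}. \<sigma> u \<in> BigDelta n r j) \<or> \<sigma> u < \<sigma> v)
                                 \<and> alg1_iter n r E \<sigma> k u = i)"
    using col unfold_small[where \<sigma>=\<sigma> and v=v and E=E and k=k, OF ok iin vs] k0 by (auto split: if_splits)
  then obtain e where eE: "e \<in> E" and ve: "v \<in> e"
    and eu: "\<And>u. u \<in> e - {v} \<Longrightarrow> ((\<exists>j\<in>{1..r}. \<sigma> u \<in> BigDelta n r j) \<or> \<sigma> u < \<sigma> v)
                                 \<and> alg1_iter n r E \<sigma> k u = i" by blast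
  have cases_u: "(ss n r i \<le> \<sigma> u \<and> \<sigma> u < \<sigma> v) \<or> (\<sigma> u \<in> SmallDelta n r (i - 1) \<and> 2 \<le> i)"
    if "u \<in> e - {v}" for u
  proof -
    have a: "alg1_iter n r E \<sigma> k u = i" and b: "(\<exists>j\<in>{1..r}. \<sigma> u \<in> BigDelta n r j) \<or> \<sigma> u < \<sigma> v"
      using eu[OF that] by auto
    from colour_pos[OF ok a] i1
    consider "\<sigma> u \<in> BigDelta n r i" | "\<sigma> u \<in> SmallDelta n r i" | "\<sigma> u \<in> SmallDelta n r (i - 1) \<and> 2 \<le> i"
      by auto
    then show ?thesis
    proof cases
      case 1 then show ?thesis using big_ge_ss big_lt_small[OF ok 1 vs] by blast
    next
      case 2
      then have "\<not> (\<exists>j\<in>{1..r}. \<sigma> u \<in> BigDelta n r j)" using big_small[OF ok] by blast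
      then show ?thesis using b small_ge_ss[OF ok 2] by auto
    next
      case 3 then show ?thesis by blast
    qed
  qed
  show ?case
  proof (cases "\<forall>u\<in>e - {v}. ss n r i \<le> \<sigma> u \<and> \<sigma> u < \<sigma> v")
    case True
    have "chainev n r E i 0 (\<lambda>_. e) v \<sigma>"
      unfolding chainev_def using True eE ve vs by (auto simp: uu_def)
    then show ?thesis unfolding i_def by blast
  next
    case False
    then obtain u where u: "u \<in> e - {v}" "\<sigma> u \<in> SmallDelta n r (i - 1)" and i2: "2 \<le> i"
      using cases_u by blast
    have finev: "finite (e - {v})" using fin eE by auto
    define m where "m = Min (\<sigma> ` (e - {v}))"
    have "m \<in> \<sigma> ` (e - {v})" unfolding m_def using finev u(1) by (intro Min_in) auto
    then obtain u1 where u1: "u1 \<in> e - {v}" "\<sigma> u1 = m" by blast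
    have minw: "\<sigma> u1 \<le> \<sigma> w" if "w \<in> e - {v}" for w
      using u1 finev that unfolding m_def by (auto intro: Min_le)
    have "\<sigma> u1 < ss n r i" using minw[OF u(1)] small_below_ss[OF ok i1(1) u(2)] by linarith
    then have u1s: "\<sigma> u1 \<in> SmallDelta n r (i - 1)" using cases_u[OF u1(1)] by auto
    have u1c: "alg1_iter n r E \<sigma> k u1 = (i - 1) + 1" using eu[OF u1(1)] i2 by auto
    have "\<exists>k<i - 1. \<exists>es. chainev n r E (i - 1) k es u1 \<sigma>"
      using Suc.IH[of u1 k] u1s u1c i1 i2 unfolding i_def by auto
    then obtain k' es' where k': "k' < i - 1" and ch: "chainev n r E (i - 1) k' es' u1 \<sigma>" by blast
    have allw: "\<sigma> u1 \<le> \<sigma> w \<and> \<sigma> w < \<sigma> v" if "w \<in> e - {v}" for w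
    proof -
      have "\<sigma> w < \<sigma> v"
        using cases_u[OF that] small_below_ss[OF ok i1(1)] small_ge_ss[OF ok vs] by fastforce
      then show ?thesis using minw[OF that] by simp
    qed
    have u1lt: "\<sigma> u1 < \<sigma> v" using allw[OF u1(1)] by simp
    have inter: "e \<inter> es' 0 = {u1}"
    proof -
      have "u1 \<in> es' 0" using chain_first_inter(1)[OF ch] .
      moreover have "w = u1" if "w \<in> e" "w \<in> es' 0" for w
      proof (rule ccontr)
        assume "w \<noteq> u1"
        then have "\<sigma> w < \<sigma> u1" using chain_first_inter(2)[OF ch] that by blast
        then show False using allw[of w] u1lt that by (cases "w = v") auto
      qed
      ultimately show ?thesis using u1 by auto
    qed
    define es where "es = (\<lambda>j. if j = 0 then e else es' (j - 1))"
    have uus: "uu es v (Suc j) = uu es' u1 j" for j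
    proof (cases j)
      case 0 then show ?thesis using inter by (simp add: uu_def es_def)
    next
      case (Suc j') then show ?thesis by (simp add: uu_def es_def)
    qed
    have uu0: "uu es v 0 = v" by (simp add: uu_def)
    have c1: "es j \<in> E \<and> uu es v j \<in> es j \<and> \<sigma> (uu es v j) \<in> SmallDelta n r (i - j)"
      if "j \<le> Suc k'" for j
    proof (cases j)
      case 0 then show ?thesis using eE ve vs uu0 by (simp add: es_def)
    next
      case (Suc j')
      then have "j' \<le> k'" using that by simp
      then have "es' j' \<in> E \<and> uu es' u1 j' \<in> es' j' \<and> \<sigma> (uu es' u1 j') \<in> SmallDelta n r (i - 1 - j')"
        using ch unfolding chainev_def by blast
      then show ?thesis using Suc uus by (simp add: es_def)
    qed
    have c2: "uu es v (Suc j) \<in> es j" if j: "j < Suc k'" for j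
    proof (cases j)
      case 0 then show ?thesis using uus[of 0] u1 chain_first_inter(1)[OF ch] by (simp add: es_def uu_def)
    next
      case (Suc j')
      then have "j' < k'" using j by simp
      then show ?thesis using ch Suc uus unfolding chainev_def by (simp add: es_def)
    qed
    have c3: "\<sigma> (uu es v (Suc j)) \<le> \<sigma> w \<and> \<sigma> w < \<sigma> (uu es v j)"
      if j: "j < Suc k'" and w: "w \<in> es j - {uu es v j}" for j w
    proof (cases j)
      case 0 then show ?thesis using w allw uus[of 0] uu0 by (simp add: es_def uu_def)
    next
      case (Suc j')
      then have "j' < k'" using j by simp
      moreover have "w \<in> es' j' - {uu es' u1 j'}" using w Suc uus[of j'] by (simp add: es_def)
      ultimately show ?thesis using ch Suc uus unfolding chainev_def by simp
    qed
    have c4: "ss n r (i - Suc k') \<le> \<sigma> w \<and> \<sigma> w < \<sigma> (uu es v (Suc k'))"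
      if w: "w \<in> es (Suc k') - {uu es v (Suc k')}" for w
    proof -
      have "w \<in> es' k' - {uu es' u1 k'}" using w uus by (simp add: es_def)
      then have "ss n r (i - 1 - k') \<le> \<sigma> w \<and> \<sigma> w < \<sigma> (uu es' u1 k')"
        using ch unfolding chainev_def by blast
      then show ?thesis using uus by auto
    qed
    have "chainev n r E i (Suc k') es v \<sigma>"
      unfolding chainev_def using c1 c2 c3 c4 by blast
    moreover have "Suc k' < i" using k' by simp
    ultimately show ?thesis unfolding i_def by blast
  qed
qed

abbreviation M0 :: "real measure" where "M0 \<equiv> uniform_measure lborel {0..<1::real}"

lemma prob_M0: "prob_space M0"
  by (rule prob_space_uniform_measure) auto

lemma emeasure_M0_le: "emeasure M0 {a..<b} \<le> ennreal (b - a)"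
proof -
  have "emeasure M0 {a..<b} = emeasure lborel ({0..<1} \<inter> {a..<b}) / emeasure lborel {0..<1::real}"
    by (rule emeasure_uniform_measure) auto
  also have "\<dots> = emeasure lborel ({0..<1} \<inter> {a..<b})" by (simp add: divide_ennreal_def)
  also have "\<dots> \<le> emeasure lborel {a..<b}" by (rule emeasure_mono) auto
  also have "\<dots> \<le> ennreal (b - a)" by (cases "a \<le> b") auto
  finally show ?thesis .
qed

lemma prob_PiM0: "prob_space (PiM I (\<lambda>_. M0))"
  by (intro prob_space_PiM prob_M0)

lemma nn_integral_M0: "f \<in> borel_measurable borel \<Longrightarrow> (\<integral>\<^sup>+x. f x \<partial>M0) \<le> (\<integral>\<^sup>+x. f x * indicator {0..<1} x \<partial>lborel)"
  by (subst nn_integral_uniform_measure) (auto simp: divide_ennreal_def mult.commute)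

lemma comp_meas: "w \<in> V \<Longrightarrow> (\<lambda>\<sigma>. \<sigma> w) \<in> borel_measurable (PiM V (\<lambda>_. M0))"
  using measurable_component_singleton[of w V "\<lambda>_. M0"] by (simp add: measurable_def)

lemma if_meas:
  assumes "w \<in> V" "lo \<in> borel_measurable (PiM V (\<lambda>_. M0))" "hi \<in> borel_measurable (PiM V (\<lambda>_. M0))"
  shows "(\<lambda>\<sigma>. if lo \<sigma> \<le> \<sigma> w \<and> \<sigma> w < hi \<sigma> then 1 else 0 :: ennreal) \<in> borel_measurable (PiM V (\<lambda>_. M0))"
proof -
  let ?A = "{\<sigma>. lo \<sigma> \<le> \<sigma> w \<and> \<sigma> w < hi \<sigma>}"
  have "?A \<inter> space (PiM V (\<lambda>_. M0)) = {\<sigma> \<in> space (PiM V (\<lambda>_. M0)). lo \<sigma> \<le> \<sigma> w} \<inter> {\<sigma> \<in> space (PiM V (\<lambda>_. M0)). \<sigma> w < hi \<sigma>}"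
    by auto
  also have "\<dots> \<in> sets (PiM V (\<lambda>_. M0))"
    using comp_meas[OF assms(1)] assms(2,3) by (intro sets.Int borel_measurable_le borel_measurable_less)
  finally have "?A \<inter> space (PiM V (\<lambda>_. M0)) \<in> sets (PiM V (\<lambda>_. M0))" .
  then have "(\<lambda>\<sigma>. if \<sigma> \<in> ?A then 1 else 0 :: ennreal) \<in> borel_measurable (PiM V (\<lambda>_. M0))"
    by (intro measurable_If_set) auto
  then show ?thesis by simp
qed

lemma L1:
  fixes V S :: "'a set" and lo hi :: "'a \<Rightarrow> ('a \<Rightarrow> real) \<Rightarrow> real" and h :: "('a \<Rightarrow> real) \<Rightarrow> ennreal"
  assumes V: "finite V" and SV: "S \<subseteq> V"
    and hm[measurable]: "h \<in> borel_measurable (PiM V (\<lambda>_. M0))"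
    and lom[measurable]: "\<And>w. w \<in> S \<Longrightarrow> lo w \<in> borel_measurable (PiM V (\<lambda>_. M0))"
    and him[measurable]: "\<And>w. w \<in> S \<Longrightarrow> hi w \<in> borel_measurable (PiM V (\<lambda>_. M0))"
    and dep: "\<And>\<sigma> \<sigma>'. (\<forall>x\<in>V - S. \<sigma> x = \<sigma>' x) \<Longrightarrow>
                 h \<sigma> = h \<sigma>' \<and> (\<forall>w\<in>S. lo w \<sigma> = lo w \<sigma>' \<and> hi w \<sigma> = hi w \<sigma>')"
  shows "(\<integral>\<^sup>+\<sigma>. h \<sigma> * (\<Prod>w\<in>S. (if lo w \<sigma> \<le> \<sigma> w \<and> \<sigma> w < hi w \<sigma> then 1 else 0)) \<partial>PiM V (\<lambda>_. M0))
         \<le> (\<integral>\<^sup>+\<sigma>. h \<sigma> * (\<Prod>w\<in>S. ennreal (hi w \<sigma> - lo w \<sigma>)) \<partial>PiM V (\<lambda>_. M0))"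
proof -
  interpret P: product_prob_space "\<lambda>_::'a. M0"
    by (auto simp: product_prob_space_def product_prob_space_axioms_def product_sigma_finite_def
                   prob_M0 prob_space_imp_sigma_finite)
  have S: "finite S" using V SV finite_subset by blast
  have VS: "V = (V - S) \<union> S" "(V - S) \<inter> S = {}" using SV by auto
  define F where "F = (\<lambda>\<sigma>. h \<sigma> * (\<Prod>w\<in>S. (if lo w \<sigma> \<le> \<sigma> w \<and> \<sigma> w < hi w \<sigma> then 1 else 0 :: ennreal)))"
  define G where "G = (\<lambda>\<sigma>. h \<sigma> * (\<Prod>w\<in>S. ennreal (hi w \<sigma> - lo w \<sigma>)))"
  have Fm: "F \<in> borel_measurable (PiM V (\<lambda>_. M0))"
    unfolding F_def using SV by (intro borel_measurable_times_ennreal borel_measurable_prod_ennreal if_meas) auto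
  have Gm: "G \<in> borel_measurable (PiM V (\<lambda>_. M0))"
    unfolding G_def using SV by (intro borel_measurable_times_ennreal borel_measurable_prod_ennreal) auto
  define y0 :: "'a \<Rightarrow> real" where "y0 = (\<lambda>_. 0)"
  have agree: "\<forall>x'\<in>V - S. merge (V - S) S (x, y) x' = merge (V - S) S (x, y') x'" for x y y'
    using VS by auto
  have Fx: "(\<integral>\<^sup>+y. F (merge (V - S) S (x, y)) \<partial>PiM S (\<lambda>_. M0))
        \<le> (\<integral>\<^sup>+y. G (merge (V - S) S (x, y)) \<partial>PiM S (\<lambda>_. M0))" for x
  proof -
    let ?m = "\<lambda>y. merge (V - S) S (x, y)"
    define L where "L w = lo w (?m y0)" for w
    define U where "U w = hi w (?m y0)" for w
    have eqF: "F (?m y) = h (?m y0) * (\<Prod>w\<in>S. (if L w \<le> y w \<and> y w < U w then 1 else 0 :: ennreal))" for y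
      unfolding F_def L_def U_def using dep[OF agree[of x y y0]] VS
      by (intro arg_cong2[where f="(*)"] prod.cong) auto
    have eqG: "G (?m y) = h (?m y0) * (\<Prod>w\<in>S. ennreal (U w - L w))" for y
      unfolding G_def L_def U_def using dep[OF agree[of x y y0]] by auto
    have "(\<integral>\<^sup>+y. F (?m y) \<partial>PiM S (\<lambda>_. M0))
        = h (?m y0) * (\<integral>\<^sup>+y. (\<Prod>w\<in>S. (if L w \<le> y w \<and> y w < U w then 1 else 0 :: ennreal)) \<partial>PiM S (\<lambda>_. M0))"
      unfolding eqF by (rule nn_integral_cmult) (use S in auto)
    also have "(\<integral>\<^sup>+y. (\<Prod>w\<in>S. (if L w \<le> y w \<and> y w < U w then 1 else 0 :: ennreal)) \<partial>PiM S (\<lambda>_. M0))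
        = (\<Prod>w\<in>S. (\<integral>\<^sup>+t. (if L w \<le> t \<and> t < U w then 1 else 0 :: ennreal) \<partial>M0))"
      by (rule P.product_nn_integral_prod[OF S]) auto
    also have "\<dots> \<le> (\<Prod>w\<in>S. ennreal (U w - L w))"
    proof (rule prod_mono_ennreal)
      fix w assume "w \<in> S"
      have "(\<integral>\<^sup>+t. (if L w \<le> t \<and> t < U w then 1 else 0 :: ennreal) \<partial>M0) = (\<integral>\<^sup>+t. indicator {L w..<U w} t \<partial>M0)"
        by (intro nn_integral_cong) (auto simp: indicator_def)
      also have "\<dots> = emeasure M0 {L w..<U w}" by (rule nn_integral_indicator) auto
      also have "\<dots> \<le> ennreal (U w - L w)" by (rule emeasure_M0_le)
      finally show "(\<integral>\<^sup>+t. (if L w \<le> t \<and> t < U w then 1 else 0 :: ennreal) \<partial>M0) \<le> ennreal (U w - L w)" .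
    qed
    finally have "(\<integral>\<^sup>+y. F (?m y) \<partial>PiM S (\<lambda>_. M0)) \<le> h (?m y0) * (\<Prod>w\<in>S. ennreal (U w - L w))"
      by (simp add: mult_left_mono)
    also have "\<dots> = (\<integral>\<^sup>+y. G (?m y) \<partial>PiM S (\<lambda>_. M0))"
      unfolding eqG using prob_space.emeasure_space_1[OF prob_PiM0[of S]] by simp
    finally show ?thesis .
  qed
  have "(\<integral>\<^sup>+\<sigma>. F \<sigma> \<partial>PiM V (\<lambda>_. M0)) = (\<integral>\<^sup>+x. (\<integral>\<^sup>+y. F (merge (V - S) S (x, y)) \<partial>PiM S (\<lambda>_. M0)) \<partial>PiM (V - S) (\<lambda>_. M0))"
    using P.product_nn_integral_fold[OF VS(2) _ S, of F] Fm V VS(1) by simp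
  also have "\<dots> \<le> (\<integral>\<^sup>+x. (\<integral>\<^sup>+y. G (merge (V - S) S (x, y)) \<partial>PiM S (\<lambda>_. M0)) \<partial>PiM (V - S) (\<lambda>_. M0))"
    by (intro nn_integral_mono Fx)
  also have "\<dots> = (\<integral>\<^sup>+\<sigma>. G \<sigma> \<partial>PiM V (\<lambda>_. M0))"
    using P.product_nn_integral_fold[OF VS(2) _ S, of G] Gm V VS(1) by simp
  finally show ?thesis unfolding F_def G_def .
qed

lemma pow_exp_bound:
  fixes D d :: real and m :: nat
  assumes "D > 0" "D + d \<ge> 0"
  shows "(D + d) ^ m \<le> D ^ m * exp (real m * d / D)"
proof -
  have "D + d = D * (1 + d / D)" using assms by (simp add: field_simps)
  moreover have "(1 + d / D) ^ m \<le> exp (d / D) ^ m"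
  proof (rule power_mono)
    show "1 + d / D \<le> exp (d / D)" by (rule exp_ge_add_one_self)
    have "0 \<le> (D + d) / D" using assms by simp
    then show "0 \<le> 1 + d / D" using assms by (simp add: field_simps)
  qed
  moreover have "exp (d / D) ^ m = exp (real m * d / D)" by (simp add: exp_of_nat_mult[symmetric])
  ultimately show ?thesis using assms
    by (metis mult_left_mono power_mult_distrib zero_le_power order_less_le)
qed

lemma tele_bound:
  fixes b q :: real and y :: "nat \<Rightarrow> real" and m m' k :: nat
  assumes b: "b > 0" and q: "q > 0" and y: "\<And>j. j \<le> k \<Longrightarrow> 0 \<le> y j \<and> y j < q"
  shows "(\<Prod>j<k. (b + q + y j - y (Suc j)) ^ m) * (b + y k) ^ m'
         \<le> (b + q) ^ (m * k) * b ^ m' * exp (real m / (b + q) * y 0 + (real m' / b - real m / (b + q)) * y k)"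
proof -
  define D where "D = b + q"
  have D: "D > 0" using b q by (simp add: D_def)
  have p1: "(\<Prod>j<k. (D + (y j - y (Suc j))) ^ m) \<le> (\<Prod>j<k. D ^ m * exp (real m * (y j - y (Suc j)) / D))"
  proof (rule prod_mono)
    fix j assume "j \<in> {..<k}"
    then have "0 \<le> y (Suc j)" "y (Suc j) < q" "0 \<le> y j" using y by auto
    then have "D + (y j - y (Suc j)) \<ge> 0" unfolding D_def using b by linarith
    then show "0 \<le> (D + (y j - y (Suc j))) ^ m \<and> (D + (y j - y (Suc j))) ^ m \<le> D ^ m * exp (real m * (y j - y (Suc j)) / D)"
      using pow_exp_bound[OF D] by auto
  qed
  have p2: "(\<Prod>j<k. D ^ m * exp (real m * (y j - y (Suc j)) / D)) = D ^ (m * k) * exp (real m / D * (y 0 - y k))"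
  proof -
    have "(\<Prod>j<k. D ^ m * exp (real m * (y j - y (Suc j)) / D)) = D ^ (m * k) * (\<Prod>j<k. exp (real m / D * (y j - y (Suc j))))"
      by (simp add: prod.distrib power_mult)
    also have "(\<Prod>j<k. exp (real m / D * (y j - y (Suc j)))) = exp (\<Sum>j<k. real m / D * (y j - y (Suc j)))"
      by (simp add: exp_sum)
    also have "(\<Sum>j<k. real m / D * (y j - y (Suc j))) = real m / D * (\<Sum>j<k. (y j - y (Suc j)))"
      by (rule sum_distrib_left[symmetric])
    also have "(\<Sum>j<k. (y j - y (Suc j))) = y 0 - y k"
      by (rule sum_lessThan_telescope')
    finally show ?thesis .
  qed
  have p3: "(b + y k) ^ m' \<le> b ^ m' * exp (real m' * y k / b)"
    using pow_exp_bound[OF b, of "y k" m'] y[of k] b by auto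
  have "(\<Prod>j<k. (b + q + y j - y (Suc j)) ^ m) = (\<Prod>j<k. (D + (y j - y (Suc j))) ^ m)"
    by (simp add: D_def add_diff_eq)
  also have "\<dots> \<le> D ^ (m * k) * exp (real m / D * (y 0 - y k))" using p1 p2 by simp
  finally have A: "(\<Prod>j<k. (b + q + y j - y (Suc j)) ^ m) \<le> D ^ (m * k) * exp (real m / D * (y 0 - y k))" .
  have "(\<Prod>j<k. (b + q + y j - y (Suc j)) ^ m) * (b + y k) ^ m'
        \<le> (D ^ (m * k) * exp (real m / D * (y 0 - y k))) * (b ^ m' * exp (real m' * y k / b))"
    using y[of k] b D by (intro mult_mono A p3) auto
  also have "\<dots> = D ^ (m * k) * b ^ m' * exp (real m / D * (y 0 - y k) + real m' * y k / b)"
    by (simp add: exp_add)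
  also have "real m / D * (y 0 - y k) + real m' * y k / b = real m / D * y 0 + (real m' / b - real m / D) * y k"
    by (simp add: algebra_simps)
  finally show ?thesis unfolding D_def .
qed

lemma int_a:
  fixes t q \<alpha> :: real
  assumes "q \<ge> 0" "\<alpha> \<ge> 0"
  shows "(\<integral>\<^sup>+x. ennreal (if x \<in> {t..<t+q} then exp (\<alpha> * (x - t)) else 0) \<partial>M0) \<le> ennreal (q * exp (\<alpha> * q))"
proof -
  have "(\<integral>\<^sup>+x. ennreal (if x \<in> {t..<t+q} then exp (\<alpha> * (x - t)) else 0) \<partial>M0)
      \<le> (\<integral>\<^sup>+x. ennreal (exp (\<alpha> * q)) * indicator {t..<t+q} x \<partial>M0)"
    using assms by (intro nn_integral_mono) (auto simp: indicator_def intro!: mult_left_mono)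
  also have "\<dots> = ennreal (exp (\<alpha> * q)) * emeasure M0 {t..<t+q}"
    by (rule nn_integral_cmult_indicator) auto
  also have "\<dots> \<le> ennreal (exp (\<alpha> * q)) * ennreal q"
    using emeasure_M0_le[of t "t+q"] by (intro mult_left_mono) auto
  also have "\<dots> = ennreal (q * exp (\<alpha> * q))" using assms by (simp add: ennreal_mult' mult.commute)
  finally show ?thesis .
qed

lemma int_b:
  fixes t q \<alpha> :: real
  assumes "q \<ge> 0" "\<alpha> > 0"
  shows "(\<integral>\<^sup>+x. ennreal (if x \<in> {t..<t+q} then exp (\<alpha> * (x - t)) else 0) \<partial>M0) \<le> ennreal (exp (\<alpha> * q) / \<alpha>)"
proof -
  let ?f = "\<lambda>x. exp (\<alpha> * (x - t))"
  have mf: "(\<lambda>x. ennreal (if x \<in> {t..<t+q} then exp (\<alpha> * (x - t)) else 0)) \<in> borel_measurable borel"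
    by measurable
  have "(\<integral>\<^sup>+x. ennreal (if x \<in> {t..<t+q} then exp (\<alpha> * (x - t)) else 0) \<partial>M0)
      \<le> (\<integral>\<^sup>+x. ennreal (if x \<in> {t..<t+q} then exp (\<alpha> * (x - t)) else 0) * indicator {0..<1} x \<partial>lborel)"
    by (rule nn_integral_M0[OF mf])
  also have "\<dots> \<le> (\<integral>\<^sup>+x. ennreal (?f x) * indicator {t..t+q} x \<partial>lborel)"
    by (intro nn_integral_mono) (auto simp: indicator_def)
  also have "\<dots> = ennreal (?f (t+q) / \<alpha> - ?f t / \<alpha>)"
  proof (rule nn_integral_FTC_Icc)
    show "?f \<in> borel_measurable borel" by measurable
    fix x assume "x \<in> {t..t+q}"
    show "((\<lambda>x. ?f x / \<alpha>) has_real_derivative ?f x) (at x)"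
      using assms by (auto intro!: derivative_eq_intros simp: field_simps)
    show "0 \<le> ?f x" by simp
  next
    show "t \<le> t + q" using assms by simp
  qed
  also have "\<dots> \<le> ennreal (?f (t+q) / \<alpha>)" using assms by (intro ennreal_leI) simp
  also have "?f (t+q) = exp (\<alpha> * q)" by simp
  finally show ?thesis .
qed

definition Bk :: "nat \<Rightarrow> nat \<Rightarrow> nat \<Rightarrow> real" where
  "Bk n r k = DD n r ^ ((n - 2) * k) * bb n r ^ (n - 1) * qq n r ^ k * exp (real (n - 1) * qq n r / bb n r)
              * DD n r / real (n - 2)"

lemma beta_prod:
  fixes A B q :: real
  assumes "1 \<le> k"
  shows "(\<Prod>j\<in>{0..k}. (if j = 0 then A else q) * (if j = k then B else 1)) = A * q ^ k * B"
proof -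
  obtain k' where k: "k = Suc k'" using assms by (cases k) auto
  have "(\<Prod>j\<in>{0..k}. (if j = 0 then A else q) * (if j = k then B else 1))
      = (\<Prod>j\<in>{0..k}. (if j = 0 then A else q)) * (\<Prod>j\<in>{0..k}. (if j = k then B else 1))"
    by (rule prod.distrib)
  also have "(\<Prod>j\<in>{0..k}. (if j = k then B else 1)) = B" by (subst prod.delta) auto
  also have "(\<Prod>j\<in>{0..k}. (if j = 0 then A else q)) = A * q ^ k"
    unfolding k by (subst prod.atLeast0_atMost_Suc_shift) simp
  finally show ?thesis .
qed

lemma integrals_prod_bound:
  fixes b q c c2 :: real and k n :: nat
  assumes b: "b > 0" and q: "q > 0" and n: "n \<ge> 3"
    and c: "c = real (n - 2) / (b + q)" and c2: "c2 = real (n - 1) / b - c"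
    and I: "\<And>j \<alpha>. j \<le> k \<Longrightarrow> \<alpha> \<ge> 0 \<Longrightarrow> \<alpha> = (if j = 0 then c else 0) + (if j = k then c2 else 0) \<Longrightarrow>
              Ig j \<le> ennreal (q * exp (\<alpha> * q)) \<and> (\<alpha> > 0 \<longrightarrow> Ig j \<le> ennreal (exp (\<alpha> * q) / \<alpha>))"
  shows "(\<Prod>j\<in>{0..k}. Ig j) \<le> ennreal (q ^ k * exp (real (n - 1) * q / b) * (b + q) / real (n - 2))"
proof -
  have cpos: "c > 0" using c n b q by simp
  have "real (n - 2) / (b + q) \<le> real (n - 1) / b"
    using b q n by (intro frac_le) auto
  then have c2pos: "c2 \<ge> 0" using c c2 by simp
  have csum: "c + c2 = real (n - 1) / b" using c2 by simp
  show ?thesis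
  proof (cases "k = 0")
    case True
    have a: "(c + c2) > 0" using csum b n by simp
    have "(\<Prod>j\<in>{0..k}. Ig j) = Ig 0" using True by simp
    also have "\<dots> \<le> ennreal (exp ((c + c2) * q) / (c + c2))"
    proof -
      have "0 \<le> k" "c + c2 \<ge> 0" "c + c2 = (if 0 = 0 then c else 0) + (if 0 = k then c2 else 0)"
        using True a by auto
      from I[OF this] a show ?thesis by blast
    qed
    also have "\<dots> \<le> ennreal (q ^ k * exp (real (n - 1) * q / b) * (b + q) / real (n - 2))"
    proof (rule ennreal_leI)
      have "1 / (c + c2) = b / real (n - 1)" using csum by simp
      also have "\<dots> \<le> (b + q) / real (n - 2)" using b q n by (intro frac_le) auto
      finally have "exp ((c + c2) * q) * (1 / (c + c2)) \<le> exp ((c + c2) * q) * ((b + q) / real (n - 2))"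
        by (intro mult_left_mono) auto
      then show "exp ((c + c2) * q) / (c + c2) \<le> q ^ k * exp (real (n - 1) * q / b) * (b + q) / real (n - 2)"
        using True csum by simp
    qed
    finally show ?thesis .
  next
    case False
    have "(\<Prod>j\<in>{0..k}. Ig j) \<le> (\<Prod>j\<in>{0..k}. ennreal ((if j = 0 then exp (c * q) / c else q) * (if j = k then exp (c2 * q) else 1)))"
    proof (rule prod_mono_ennreal)
      fix j assume j: "j \<in> {0..k}"
      show "Ig j \<le> ennreal ((if j = 0 then exp (c * q) / c else q) * (if j = k then exp (c2 * q) else 1))"
      proof (cases "j = 0")
        case True
        then show ?thesis using I[of j c] False cpos by auto
      next
        case j0: False
        show ?thesis
        proof (cases "j = k")
          case True
          then show ?thesis using I[of j c2] j0 c2pos by auto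
        next
          case False
          then show ?thesis using I[of j 0] j0 j by auto
        qed
      qed
    qed
    also have "\<dots> = ennreal (\<Prod>j\<in>{0..k}. (if j = 0 then exp (c * q) / c else q) * (if j = k then exp (c2 * q) else 1))"
      using cpos q by (intro prod_ennreal) auto
    also have "(\<Prod>j\<in>{0..k}. (if j = 0 then exp (c * q) / c else q) * (if j = k then exp (c2 * q) else 1))
        = exp (c * q) / c * q ^ k * exp (c2 * q)"
      using False by (intro beta_prod) auto
    also have "\<dots> = q ^ k * exp ((c + c2) * q) * (1 / c)"
      by (simp add: exp_add distrib_right)
    also have "\<dots> = q ^ k * exp (real (n - 1) * q / b) * (b + q) / real (n - 2)"
      using csum c by simp
    finally show ?thesis .
  qed
qed

lemma prod_integral:
  fixes V :: "'a set" and u :: "nat \<Rightarrow> 'a" and g :: "nat \<Rightarrow> real \<Rightarrow> ennreal"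
  assumes V: "finite V" and inj: "inj_on u {0..k}" and uV: "u ` {0..k} \<subseteq> V"
    and gm: "\<And>j. g j \<in> borel_measurable borel"
  shows "(\<integral>\<^sup>+\<sigma>. (\<Prod>j\<in>{0..k}. g j (\<sigma> (u j))) \<partial>PiM V (\<lambda>_. M0)) = (\<Prod>j\<in>{0..k}. \<integral>\<^sup>+x. g j x \<partial>M0)"
proof -
  interpret P: product_prob_space "\<lambda>_::'a. M0"
    by (auto simp: product_prob_space_def product_prob_space_axioms_def product_sigma_finite_def
                   prob_M0 prob_space_imp_sigma_finite)
  define T where "T = u ` {0..k}"
  define G where "G w = (if w \<in> T then g (inv_into {0..k} u w) else (\<lambda>_. 1))" for w
  have GT: "(\<Prod>w\<in>T. f w) = (\<Prod>j\<in>{0..k}. f (u j))" for f :: "'a \<Rightarrow> ennreal"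
    unfolding T_def by (rule prod.reindex[OF inj, unfolded comp_def])
  have Gu: "G (u j) = g j" if "j \<in> {0..k}" for j
    using that inj by (simp add: G_def T_def)
  have eq1: "(\<Prod>j\<in>{0..k}. g j (\<sigma> (u j))) = (\<Prod>w\<in>V. G w (\<sigma> w))" for \<sigma> :: "'a \<Rightarrow> real"
  proof -
    have "(\<Prod>j\<in>{0..k}. g j (\<sigma> (u j))) = (\<Prod>w\<in>T. G w (\<sigma> w))"
      unfolding GT using Gu by (intro prod.cong) auto
    also have "\<dots> = (\<Prod>w\<in>V. G w (\<sigma> w))"
      using uV V by (intro prod.mono_neutral_left) (auto simp: G_def T_def)
    finally show ?thesis .
  qed
  have Gm: "G w \<in> borel_measurable M0" for w
    using gm unfolding G_def by (auto simp: measurable_def)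
  have "(\<integral>\<^sup>+\<sigma>. (\<Prod>j\<in>{0..k}. g j (\<sigma> (u j))) \<partial>PiM V (\<lambda>_. M0)) = (\<integral>\<^sup>+\<sigma>. (\<Prod>w\<in>V. G w (\<sigma> w)) \<partial>PiM V (\<lambda>_. M0))"
    unfolding eq1 ..
  also have "\<dots> = (\<Prod>w\<in>V. integral\<^sup>N M0 (G w))"
    by (rule P.product_nn_integral_prod[OF V]) (use Gm in auto)
  also have "\<dots> = (\<Prod>w\<in>T. integral\<^sup>N M0 (G w))"
  proof (rule prod.mono_neutral_right[OF V])
    show "T \<subseteq> V" using uV by (simp add: T_def)
    show "\<forall>w\<in>V - T. integral\<^sup>N M0 (G w) = 1"
      using prob_space.emeasure_space_1[OF prob_M0] by (auto simp: G_def)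
  qed
  also have "\<dots> = (\<Prod>j\<in>{0..k}. integral\<^sup>N M0 (G (u j)))" by (rule GT)
  also have "\<dots> = (\<Prod>j\<in>{0..k}. \<integral>\<^sup>+x. g j x \<partial>M0)" using Gu by (intro prod.cong) auto
  finally show ?thesis .
qed

lemma ss_step: "1 \<le> m \<Longrightarrow> ss n r m - ss n r (m - 1) = DD n r"
  unfolding ss_def by (simp add: of_nat_diff algebra_simps)

lemma chain_bound:
  fixes V :: "'a set" and E :: "'a set set"
  assumes ok: "okp n r" and n3: "3 \<le> n" and V: "finite V" and EV: "\<forall>e\<in>E. e \<subseteq> V \<and> card e = n"
    and i1: "1 \<le> i" and ir: "i < r" and ki: "k < i"
  shows "\<exists>F \<in> borel_measurable (PiM V (\<lambda>_. M0)).
           (\<forall>\<sigma>\<in>space (PiM V (\<lambda>_. M0)). chainev n r E i k es v \<sigma> \<longrightarrow> 1 \<le> F \<sigma>) \<and>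
           (\<integral>\<^sup>+\<sigma>. F \<sigma> \<partial>PiM V (\<lambda>_. M0)) \<le> ennreal (Bk n r k)"
proof (cases "\<exists>\<sigma>0. chainev n r E i k es v \<sigma>0")
  case False
  then show ?thesis by (intro bexI[of _ "\<lambda>_. 0"]) auto
next
  case True
  then obtain \<sigma>0 where ch0: "chainev n r E i k es v \<sigma>0" by blast
  define b where "b = bb n r"
  define q where "q = qq n r"
  define D where "D = DD n r"
  have bpos: "b > 0" and qpos: "q > 0" and Dbq: "D = b + q"
    using okp_pos[OF ok] by (auto simp: b_def q_def D_def DD_def)
  have bD: "bb n r = b" "DD n r = b + q" "DD n r = D" using Dbq by (auto simp: b_def D_def)
  define u where "u = uu es v"
  define t where "t m = ss n r m + b" for m
  define PM where "PM = PiM V (\<lambda>_. M0)"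
  have h1: "\<And>j. j \<le> k \<Longrightarrow> es j \<in> E \<and> u j \<in> es j \<and> \<sigma>0 (u j) \<in> SmallDelta n r (i - j)"
    and h2: "\<And>j. j < k \<Longrightarrow> u (Suc j) \<in> es j \<and> (\<forall>w\<in>es j - {u j}. \<sigma>0 (u (Suc j)) \<le> \<sigma>0 w \<and> \<sigma>0 w < \<sigma>0 (u j))"
    and h3: "\<forall>w\<in>es k - {u k}. ss n r (i - k) \<le> \<sigma>0 w \<and> \<sigma>0 w < \<sigma>0 (u k)"
    using ch0 unfolding chainev_def u_def by auto
  have dec: "\<sigma>0 (u j') < \<sigma>0 (u j)" if "j < j'" "j' \<le> k" for j j'
    using small_lt[OF ok, of "\<sigma>0 (u j')" "i - j'" "\<sigma>0 (u j)" "i - j"] h1[of j] h1[of j'] that ki by auto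
  have dec': "\<sigma>0 (u j') \<le> \<sigma>0 (u j)" if "j \<le> j'" "j' \<le> k" for j j'
    using dec[of j j'] that by (cases "j = j'") auto
  have uV: "u j \<in> V" if "j \<le> k" for j using h1[OF that] EV by blast
  have uinj: "inj_on u {0..k}"
  proof (rule inj_onI)
    fix x y assume "x \<in> {0..k}" "y \<in> {0..k}" "u x = u y"
    then show "x = y" using dec[of x y] dec[of y x] by (cases x y rule: linorder_cases) auto
  qed
  define S where "S j = (if j < k then es j - {u j, u (Suc j)} else es k - {u k})" for j
  define lowb where "lowb j = (if j < k then \<sigma>0 (u (Suc j)) else ss n r (i - k))" for j
  have win: "lowb j \<le> \<sigma>0 w \<and> \<sigma>0 w < \<sigma>0 (u j)" if "j \<le> k" "w \<in> S j" for j w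
  proof (cases "j < k")
    case True then show ?thesis using h2[of j] that by (auto simp: S_def lowb_def)
  next
    case False then have "j = k" using that by simp
    then show ?thesis using h3 that by (auto simp: S_def lowb_def)
  qed
  have lowb_ge: "\<sigma>0 (u j') \<le> lowb j" if "j < j'" "j' \<le> k" for j j'
    using dec'[of "Suc j" j'] that by (auto simp: lowb_def)
  have disjS: "S j \<inter> S j' = {}" if "j \<le> k" "j' \<le> k" "j \<noteq> j'" for j j'
  proof -
    have "w \<notin> S j'" if "j < j'" "j' \<le> k" "w \<in> S j" for j j' w
      using win[of j' w] win[of j w] lowb_ge[of j j'] that by fastforce
    then show ?thesis using that by (cases j j' rule: linorder_cases) auto
  qed
  have disjT: "u m \<notin> S j" if "j \<le> k" "m \<le> k" for j m
  proof
    assume um: "u m \<in> S j"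
    consider "m < j" | "m = j" | "j < m" by linarith
    then show False
    proof cases
      case 1 then show False using win[OF that(1) um] dec[of m j] that by auto
    next
      case 2 then show False using um that by (cases "j < k") (auto simp: S_def)
    next
      case 3
      show False
      proof (cases "m = Suc j")
        case True then show False using um 3 that by (auto simp: S_def)
      next
        case False
        then have "Suc j < m" using 3 by simp
        then have "\<sigma>0 (u m) < \<sigma>0 (u (Suc j))" using dec[of "Suc j" m] that by simp
        moreover have "j < k" using 3 that by simp
        ultimately show False using win[OF that(1) um] by (auto simp: lowb_def)
      qed
    qed
  qed
  have esfin: "finite (es j)" "card (es j) = n" if "j \<le> k" for j
    using h1[OF that] EV n3 card_ge_0_finite[of "es j"] by auto
  have cardS: "card (S j) = (if j < k then n - 2 else n - 1)" if "j \<le> k" for j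
  proof (cases "j < k")
    case True
    have ne: "u j \<noteq> u (Suc j)" using dec[of j "Suc j"] True by auto
    have sub: "{u j, u (Suc j)} \<subseteq> es j" using h1[OF that] h2[OF True] by auto
    have "card (S j) = card (es j) - card {u j, u (Suc j)}"
      using True sub esfin[OF that] by (simp add: S_def card_Diff_subset)
    then show ?thesis using ne True esfin[OF that] by simp
  next
    case False
    then have "j = k" using that by simp
    then show ?thesis using h1[of k] esfin[of k] by (simp add: S_def)
  qed
  have SV: "S j \<subseteq> V" if "j \<le> k" for j using h1[OF that] h1[of k] EV by (auto simp: S_def)
  define SS where "SS = (\<Union>j\<in>{0..k}. S j)"
  define T where "T = u ` {0..k}"
  have SSV: "SS \<subseteq> V" using SV unfolding SS_def by fastforce
  have TV: "T \<subseteq> V - SS" using uV disjT by (auto simp: T_def SS_def)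
  define lev where "lev w = (LEAST j. j \<le> k \<and> w \<in> S j)" for w
  have lev_eq: "lev w = j" if "j \<le> k" "w \<in> S j" for w j
    unfolding lev_def
  proof (rule Least_equality)
    show "j \<le> k \<and> w \<in> S j" using that by simp
    fix j' assume "j' \<le> k \<and> w \<in> S j'"
    then have "j' = j" using disjS[of j j'] that by blast
    then show "j \<le> j'" by simp
  qed
  have lev_k: "lev w \<le> k" "w \<in> S (lev w)" if "w \<in> SS" for w
    using that lev_eq by (auto simp: SS_def)
  define lo where "lo w \<sigma> = (if lev w < k then \<sigma> (u (Suc (lev w))) else ss n r (i - k))" for w and \<sigma> :: "'a \<Rightarrow> real"
  define hi where "hi w \<sigma> = \<sigma> (u (lev w))" for w and \<sigma> :: "'a \<Rightarrow> real"
  define h where "h \<sigma> = (\<Prod>j\<in>{0..k}. (if ss n r (i - j) + b \<le> \<sigma> (u j) \<and> \<sigma> (u j) < ss n r (i - j) + D then 1 else 0 :: ennreal))"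
    for \<sigma> :: "'a \<Rightarrow> real"
  define F where "F \<sigma> = h \<sigma> * (\<Prod>w\<in>SS. (if lo w \<sigma> \<le> \<sigma> w \<and> \<sigma> w < hi w \<sigma> then 1 else 0))" for \<sigma>
  have lom: "lo w \<in> borel_measurable PM" if "w \<in> SS" for w
    using lev_k[OF that] uV unfolding lo_def PM_def by (cases "lev w < k") (auto intro: comp_meas)
  have him: "hi w \<in> borel_measurable PM" if "w \<in> SS" for w
    using lev_k[OF that] uV unfolding hi_def PM_def by (auto intro: comp_meas)
  have hm: "h \<in> borel_measurable PM"
    unfolding h_def PM_def by (intro borel_measurable_prod_ennreal if_meas uV) auto
  have Fm: "F \<in> borel_measurable PM"
    unfolding F_def using SSV lom him hm unfolding PM_def
    by (intro borel_measurable_times_ennreal borel_measurable_prod_ennreal if_meas) auto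
  have F1: "1 \<le> F \<sigma>" if "chainev n r E i k es v \<sigma>" for \<sigma>
  proof -
    have g1: "\<And>j. j \<le> k \<Longrightarrow> \<sigma> (u j) \<in> SmallDelta n r (i - j)"
      and g2: "\<And>j. j < k \<Longrightarrow> (\<forall>w\<in>es j - {u j}. \<sigma> (u (Suc j)) \<le> \<sigma> w \<and> \<sigma> w < \<sigma> (u j))"
      and g3: "\<forall>w\<in>es k - {u k}. ss n r (i - k) \<le> \<sigma> w \<and> \<sigma> w < \<sigma> (u k)"
      using that unfolding chainev_def u_def by auto
    have "h \<sigma> = 1" unfolding h_def
      using g1 by (intro prod.neutral) (auto simp: SmallDelta_eq b_def D_def)
    moreover have "(\<Prod>w\<in>SS. (if lo w \<sigma> \<le> \<sigma> w \<and> \<sigma> w < hi w \<sigma> then 1 else 0 :: ennreal)) = 1"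
    proof (intro prod.neutral ballI)
      fix w assume w: "w \<in> SS"
      have "lo w \<sigma> \<le> \<sigma> w \<and> \<sigma> w < hi w \<sigma>"
      proof (cases "lev w < k")
        case True then show ?thesis using g2[OF True] lev_k[OF w] by (auto simp: lo_def hi_def S_def)
      next
        case False then have "lev w = k" using lev_k[OF w] by simp
        then show ?thesis using g3 lev_k[OF w] by (auto simp: lo_def hi_def S_def)
      qed
      then show "(if lo w \<sigma> \<le> \<sigma> w \<and> \<sigma> w < hi w \<sigma> then 1 else 0 :: ennreal) = 1" by simp
    qed
    ultimately show ?thesis by (simp add: F_def)
  qed
  have step1: "(\<integral>\<^sup>+\<sigma>. F \<sigma> \<partial>PM) \<le> (\<integral>\<^sup>+\<sigma>. h \<sigma> * (\<Prod>w\<in>SS. ennreal (hi w \<sigma> - lo w \<sigma>)) \<partial>PM)"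
    unfolding F_def PM_def
  proof (rule L1[OF V SSV])
    show "h \<in> borel_measurable (PiM V (\<lambda>_. M0))" using hm by (simp add: PM_def)
    show "\<And>w. w \<in> SS \<Longrightarrow> lo w \<in> borel_measurable (PiM V (\<lambda>_. M0))" using lom by (simp add: PM_def)
    show "\<And>w. w \<in> SS \<Longrightarrow> hi w \<in> borel_measurable (PiM V (\<lambda>_. M0))" using him by (simp add: PM_def)
    fix \<sigma> \<sigma>' :: "'a \<Rightarrow> real" assume ag: "\<forall>x\<in>V - SS. \<sigma> x = \<sigma>' x"
    have agu: "\<sigma> (u j) = \<sigma>' (u j)" if "j \<le> k" for j
    proof -
      have "u j \<in> T" unfolding T_def using that by simp
      then have "u j \<in> V - SS" using TV by blast
      then show ?thesis using ag by blast
    qed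
    have "h \<sigma> = h \<sigma>'" unfolding h_def using agu by (intro prod.cong) auto
    moreover have "lo w \<sigma> = lo w \<sigma>' \<and> hi w \<sigma> = hi w \<sigma>'" if "w \<in> SS" for w
      using agu lev_k[OF that] by (auto simp: lo_def hi_def)
    ultimately show "h \<sigma> = h \<sigma>' \<and> (\<forall>w\<in>SS. lo w \<sigma> = lo w \<sigma>' \<and> hi w \<sigma> = hi w \<sigma>')" by blast
  qed

  define len where "len j \<sigma> = (if j < k then \<sigma> (u j) - \<sigma> (u (Suc j)) else \<sigma> (u k) - ss n r (i - k))"
    for j and \<sigma> :: "'a \<Rightarrow> real"
  define cc where "cc j = (if j < k then n - 2 else n - 1)" for j
  have Sfin: "finite (S j)" if "j \<le> k" for j using SV[OF that] V finite_subset by blast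
  have step3: "(\<Prod>w\<in>SS. ennreal (hi w \<sigma> - lo w \<sigma>)) = (\<Prod>j\<in>{0..k}. ennreal (len j \<sigma>) ^ cc j)" for \<sigma>
  proof -
    have "(\<Prod>w\<in>SS. ennreal (hi w \<sigma> - lo w \<sigma>)) = (\<Prod>j\<in>{0..k}. (\<Prod>w\<in>S j. ennreal (hi w \<sigma> - lo w \<sigma>)))"
      unfolding SS_def using Sfin disjS by (intro prod.UNION_disjoint) auto
    also have "\<dots> = (\<Prod>j\<in>{0..k}. (\<Prod>w\<in>S j. ennreal (len j \<sigma>)))"
    proof (intro prod.cong refl)
      fix j w assume j: "j \<in> {0..k}" and w: "w \<in> S j"
      then have "lev w = j" using lev_eq by auto
      then show "ennreal (hi w \<sigma> - lo w \<sigma>) = ennreal (len j \<sigma>)"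
        using j by (auto simp: hi_def lo_def len_def)
    qed
    also have "\<dots> = (\<Prod>j\<in>{0..k}. ennreal (len j \<sigma>) ^ cc j)"
      using cardS by (intro prod.cong refl) (auto simp: cc_def)
    finally show ?thesis .
  qed
  define c where "c = real (n - 2) / (b + q)"
  define c2 where "c2 = real (n - 1) / b - c"
  define \<alpha> where "\<alpha> j = (if j = 0 then c else 0) + (if j = k then c2 else 0)" for j
  define g where "g j x = ennreal (if x \<in> {t (i - j)..<t (i - j) + q} then exp (\<alpha> j * (x - t (i - j))) else 0)" for j x
  define C where "C = (b + q) ^ ((n - 2) * k) * b ^ (n - 1)"
  have step4: "h \<sigma> * (\<Prod>j\<in>{0..k}. ennreal (len j \<sigma>) ^ cc j) \<le> ennreal C * (\<Prod>j\<in>{0..k}. g j (\<sigma> (u j)))" for \<sigma>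
  proof (cases "\<forall>j\<le>k. \<sigma> (u j) \<in> SmallDelta n r (i - j)")
    case False
    then obtain j where j: "j \<le> k" "\<sigma> (u j) \<notin> SmallDelta n r (i - j)" by blast
    have "h \<sigma> = 0" unfolding h_def
      using j by (intro prod_zero bexI[of _ j]) (auto simp: SmallDelta_eq b_def D_def)
    then show ?thesis by simp
  next
    case True
    define y where "y j = \<sigma> (u j) - t (i - j)" for j
    have y: "0 \<le> y j \<and> y j < q" if "j \<le> k" for j
      using True that by (auto simp: y_def t_def SmallDelta_eq bD(1,2))
    have h1': "h \<sigma> = 1" unfolding h_def
      using True by (intro prod.neutral) (auto simp: SmallDelta_eq b_def D_def)
    have lenj: "len j \<sigma> = b + q + y j - y (Suc j)" if "j < k" for j
    proof -
      have "1 \<le> i - j" using that ki by simp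
      have im: "i - Suc j = i - j - 1" by simp
      from ss_step[OF \<open>1 \<le> i - j\<close>, of n r] have eqD: "ss n r (i - j) - ss n r (i - Suc j) = b + q"
        unfolding im bD(2) .
      have "len j \<sigma> = \<sigma> (u j) - \<sigma> (u (Suc j))" by (simp add: len_def that)
      then show ?thesis using eqD unfolding y_def t_def by linarith
    qed
    have lenk: "len k \<sigma> = b + y k" by (simp add: len_def y_def t_def)
    have lenpos: "0 \<le> len j \<sigma>" if "j \<le> k" for j
    proof (cases "j < k")
      case True then show ?thesis using lenj[OF True] y[of j] y[of "Suc j"] bpos by simp
    next
      case False then have "j = k" using that by simp
      then show ?thesis using lenk y[of k] bpos by simp
    qed
    have "(\<Prod>j\<in>{0..k}. ennreal (len j \<sigma>) ^ cc j) = ennreal (\<Prod>j\<in>{0..k}. len j \<sigma> ^ cc j)"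
    proof -
      have "(\<Prod>j\<in>{0..k}. ennreal (len j \<sigma>) ^ cc j) = (\<Prod>j\<in>{0..k}. ennreal (len j \<sigma> ^ cc j))"
        by (intro prod.cong refl) (simp add: ennreal_power lenpos)
      also have "\<dots> = ennreal (\<Prod>j\<in>{0..k}. len j \<sigma> ^ cc j)"
        by (rule prod_ennreal) (simp add: lenpos)
      finally show ?thesis .
    qed
    also have "(\<Prod>j\<in>{0..k}. len j \<sigma> ^ cc j) = (\<Prod>j<k. len j \<sigma> ^ cc j) * len k \<sigma> ^ cc k"
      by (simp add: atLeast0AtMost lessThan_Suc_atMost[symmetric])
    also have "\<dots> = (\<Prod>j<k. (b + q + y j - y (Suc j)) ^ (n - 2)) * (b + y k) ^ (n - 1)"
      using lenj lenk by (simp add: cc_def)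
    also have "\<dots> \<le> (b + q) ^ ((n - 2) * k) * b ^ (n - 1) * exp (real (n - 2) / (b + q) * y 0 + (real (n - 1) / b - real (n - 2) / (b + q)) * y k)"
      by (rule tele_bound[OF bpos qpos y])
    also have "\<dots> = C * exp (c * y 0 + c2 * y k)" by (simp add: C_def c_def c2_def)
    finally have A: "(\<Prod>j\<in>{0..k}. ennreal (len j \<sigma>) ^ cc j) \<le> ennreal (C * exp (c * y 0 + c2 * y k))"
      by (simp add: ennreal_leI)
    have sumeq: "(\<Sum>j\<in>{0..k}. \<alpha> j * y j) = c * y 0 + c2 * y k"
    proof -
      have "(\<Sum>j\<in>{0..k}. \<alpha> j * y j) = (\<Sum>j\<in>{0..k}. (if j = 0 then c * y j else 0)) + (\<Sum>j\<in>{0..k}. (if j = k then c2 * y j else 0))"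
        unfolding sum.distrib[symmetric] by (intro sum.cong refl) (simp add: \<alpha>_def distrib_right)
      also have "\<dots> = c * y 0 + c2 * y k" by (simp add: sum.delta)
      finally show ?thesis .
    qed
    have gval: "g j (\<sigma> (u j)) = ennreal (exp (\<alpha> j * y j))" if "j \<le> k" for j
      using y[OF that] by (simp add: g_def y_def)
    have "ennreal C * (\<Prod>j\<in>{0..k}. g j (\<sigma> (u j))) = ennreal C * (\<Prod>j\<in>{0..k}. ennreal (exp (\<alpha> j * y j)))"
      using gval by simp
    also have "\<dots> = ennreal (C * exp (\<Sum>j\<in>{0..k}. \<alpha> j * y j))"
    proof -
      have "(\<Prod>j\<in>{0..k}. ennreal (exp (\<alpha> j * y j))) = ennreal (\<Prod>j\<in>{0..k}. exp (\<alpha> j * y j))"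
        by (rule prod_ennreal) simp
      also have "(\<Prod>j\<in>{0..k}. exp (\<alpha> j * y j)) = exp (\<Sum>j\<in>{0..k}. \<alpha> j * y j)"
        by (rule exp_sum[symmetric]) simp
      finally have "(\<Prod>j\<in>{0..k}. ennreal (exp (\<alpha> j * y j))) = ennreal (exp (\<Sum>j\<in>{0..k}. \<alpha> j * y j))" .
      moreover have "C \<ge> 0" using bpos qpos by (simp add: C_def)
      ultimately show ?thesis by (simp add: ennreal_mult)
    qed
    finally have B: "ennreal C * (\<Prod>j\<in>{0..k}. g j (\<sigma> (u j))) = ennreal (C * exp (c * y 0 + c2 * y k))"
      unfolding sumeq .
    show ?thesis using A B h1' by simp
  qed
  have gm: "g j \<in> borel_measurable borel" for j unfolding g_def by measurable
  have step6: "(\<Prod>j\<in>{0..k}. \<integral>\<^sup>+x. g j x \<partial>M0) \<le> ennreal (q ^ k * exp (real (n - 1) * q / b) * (b + q) / real (n - 2))"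
  proof (rule integrals_prod_bound[OF bpos qpos n3 c_def c2_def])
    fix j and a :: real assume j: "j \<le> k" and a: "a \<ge> 0" and ad: "a = (if j = 0 then c else 0) + (if j = k then c2 else 0)"
    then have ga: "g j = (\<lambda>x. ennreal (if x \<in> {t (i - j)..<t (i - j) + q} then exp (a * (x - t (i - j))) else 0))"
      by (intro ext) (simp add: g_def \<alpha>_def)
    show "(\<integral>\<^sup>+x. g j x \<partial>M0) \<le> ennreal (q * exp (a * q)) \<and> (a > 0 \<longrightarrow> (\<integral>\<^sup>+x. g j x \<partial>M0) \<le> ennreal (exp (a * q) / a))"
      unfolding ga using int_a[of q a] int_b[of q a] qpos a by auto
  qed
  have "(\<integral>\<^sup>+\<sigma>. F \<sigma> \<partial>PM) \<le> (\<integral>\<^sup>+\<sigma>. h \<sigma> * (\<Prod>j\<in>{0..k}. ennreal (len j \<sigma>) ^ cc j) \<partial>PM)"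
    using step1 step3 by simp
  also have "\<dots> \<le> (\<integral>\<^sup>+\<sigma>. ennreal C * (\<Prod>j\<in>{0..k}. g j (\<sigma> (u j))) \<partial>PM)"
    by (intro nn_integral_mono step4)
  also have "\<dots> = ennreal C * (\<integral>\<^sup>+\<sigma>. (\<Prod>j\<in>{0..k}. g j (\<sigma> (u j))) \<partial>PM)"
  proof (rule nn_integral_cmult)
    show "(\<lambda>\<sigma>. \<Prod>j\<in>{0..k}. g j (\<sigma> (u j))) \<in> borel_measurable PM"
      unfolding PM_def using gm uV
      by (intro borel_measurable_prod_ennreal measurable_compose[OF comp_meas]) auto
  qed
  also have "(\<integral>\<^sup>+\<sigma>. (\<Prod>j\<in>{0..k}. g j (\<sigma> (u j))) \<partial>PM) = (\<Prod>j\<in>{0..k}. \<integral>\<^sup>+x. g j x \<partial>M0)"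
    unfolding PM_def using uV by (intro prod_integral[OF V uinj _ gm]) auto
  also have "ennreal C * \<dots> \<le> ennreal C * ennreal (q ^ k * exp (real (n - 1) * q / b) * (b + q) / real (n - 2))"
    by (intro mult_left_mono step6) auto
  also have "\<dots> = ennreal (Bk n r k)"
  proof -
    have C0: "C \<ge> 0" using bpos qpos by (simp add: C_def)
    have X0: "q ^ k * exp (real (n - 1) * q / b) * (b + q) / real (n - 2) \<ge> 0" using bpos qpos by simp
    have qD: "qq n r = q" by (simp add: q_def)
    have "Bk n r k = C * (q ^ k * exp (real (n - 1) * q / b) * (b + q) / real (n - 2))"
      unfolding Bk_def C_def bD(1,2) qD by (simp add: mult_ac)
    then show ?thesis using ennreal_mult[OF C0 X0] by simp
  qed
  finally have int: "(\<integral>\<^sup>+\<sigma>. F \<sigma> \<partial>PM) \<le> ennreal (Bk n r k)" .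
  show ?thesis
    using Fm F1 int unfolding PM_def by blast
qed

lemma coord_any: "(\<lambda>\<sigma>. \<sigma> v) \<in> borel_measurable (PiM V (\<lambda>_. M0))"
proof (cases "v \<in> V")
  case True then show ?thesis by (rule comp_meas)
next
  case False
  have "(\<lambda>\<sigma>. \<sigma> v) \<in> borel_measurable (PiM V (\<lambda>_. M0)) \<longleftrightarrow> (\<lambda>\<sigma>. undefined :: real) \<in> borel_measurable (PiM V (\<lambda>_. M0))"
  proof (rule Sigma_Algebra.measurable_cong)
    fix w :: "'a \<Rightarrow> real" assume "w \<in> space (PiM V (\<lambda>_. M0))"
    then have "w \<in> PiE V (\<lambda>_. space M0)" by (simp add: space_PiM)
    then show "w v = undefined" using False by (rule PiE_arb)
  qed
  then show ?thesis by simp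
qed

lemma pred_big: "Measurable.pred (PiM V (\<lambda>_. M0)) (\<lambda>\<sigma>. \<sigma> v \<in> BigDelta n r j)"
  by (rule pred_sets2[OF _ coord_any]) (simp add: BigDelta_eq)

lemma pred_small: "Measurable.pred (PiM V (\<lambda>_. M0)) (\<lambda>\<sigma>. \<sigma> v \<in> SmallDelta n r j)"
  by (rule pred_sets2[OF _ coord_any]) (simp add: SmallDelta_eq)

lemma pred_less: "Measurable.pred (PiM V (\<lambda>_. M0)) (\<lambda>\<sigma>. \<sigma> u < \<sigma> v)"
  using coord_any[of u V] coord_any[of v V] by measurable

lemma alg_meas:
  assumes E: "finite E" "\<forall>e\<in>E. finite e"
  shows "(\<lambda>\<sigma>. alg1_iter n r E \<sigma> k v) \<in> measurable (PiM V (\<lambda>_. M0)) (count_space UNIV)"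
proof (induction k arbitrary: v)
  case 0 then show ?case by simp
next
  case (Suc k)
  note IH[measurable] = Suc.IH
  note [measurable] = pred_big pred_small pred_less
  have Q: "Measurable.pred (PiM V (\<lambda>_. M0)) (\<lambda>\<sigma>. \<exists>e\<in>E. v \<in> e \<and>
                 (\<forall>u\<in>e - {v}. ((\<exists>j\<in>{1..r}. \<sigma> u \<in> BigDelta n r j) \<or> \<sigma> u < \<sigma> v)
                                 \<and> alg1_iter n r E \<sigma> k u = i))" for i
  proof (intro pred_intros_finite(4) E(1))
    fix e assume "e \<in> E"
    then have fe: "finite (e - {v})" using E by auto
    show "Measurable.pred (PiM V (\<lambda>_. M0)) (\<lambda>\<sigma>. v \<in> e \<and>
                 (\<forall>u\<in>e - {v}. ((\<exists>j\<in>{1..r}. \<sigma> u \<in> BigDelta n r j) \<or> \<sigma> u < \<sigma> v)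
                                 \<and> alg1_iter n r E \<sigma> k u = i))"
      by (intro pred_intros_conj1' pred_intros_finite(3) fe) measurable
  qed
  have Q2: "Measurable.pred (PiM V (\<lambda>_. M0)) (\<lambda>\<sigma>. \<exists>e\<in>E. v \<in> e \<and>
                 (\<forall>u\<in>e - {v}. ((\<exists>j\<in>{1..r}. \<sigma> u \<in> BigDelta n r j) \<or> \<sigma> u < \<sigma> v)
                                 \<and> alg1_iter n r E \<sigma> k u = (LEAST i. i \<in> {1..<r} \<and> \<sigma> v \<in> SmallDelta n r i)))"
  proof -
    have eq: "(\<lambda>\<sigma>. \<exists>e\<in>E. v \<in> e \<and>
                 (\<forall>u\<in>e - {v}. ((\<exists>j\<in>{1..r}. \<sigma> u \<in> BigDelta n r j) \<or> \<sigma> u < \<sigma> v)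
                                 \<and> alg1_iter n r E \<sigma> k u = (LEAST i. i \<in> {1..<r} \<and> \<sigma> v \<in> SmallDelta n r i)))
      = (\<lambda>\<sigma>. \<exists>i::nat. (LEAST i. i \<in> {1..<r} \<and> \<sigma> v \<in> SmallDelta n r i) = i \<and> (\<exists>e\<in>E. v \<in> e \<and>
                 (\<forall>u\<in>e - {v}. ((\<exists>j\<in>{1..r}. \<sigma> u \<in> BigDelta n r j) \<or> \<sigma> u < \<sigma> v)
                                 \<and> alg1_iter n r E \<sigma> k u = i)))"
      by auto
    show ?thesis unfolding eq using Q by measurable
  qed
  show ?case
    unfolding alg1_iter.simps Let_def using Q2 by measurable
qed

lemma numeric:
  fixes n r :: nat and M :: real
  assumes r2: "2 \<le> r" and n100: "100 \<le> n" and l1: "1 \<le> ln (real n)"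
    and lsq: "ln (real n) ^ 2 \<le> real n / 100" and M0: "0 \<le> M"
    and Mb: "M \<le> 0.01 * (real n / ln (real n)) powr ((real r - 1) / real r) * real r ^ (n - 1)"
  shows "okp n r"
    and "(\<Sum>k<i. real n * M ^ (k + 1) * Bk n r k) \<le> 0.04 * exp 1 * real n / (real r * ln (real n))"
proof -
  define nn where "nn = real n"
  define l where "l = ln nn"
  define \<Lambda> where "\<Lambda> = nn / l"
  define L where "L = ln \<Lambda>"
  define rr where "rr = real r"
  have nn100: "nn \<ge> 100" using n100 by (simp add: nn_def)
  have lpos: "l \<ge> 1" using l1 by (simp add: l_def nn_def)
  have lsq': "l ^ 2 \<le> nn / 100" using lsq by (simp add: l_def nn_def)
  have rr2: "rr \<ge> 2" using r2 by (simp add: rr_def)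
  have lnn: "l < nn" unfolding l_def using nn100 by simp
  have Lpos: "\<Lambda> > 1" using lnn lpos by (simp add: \<Lambda>_def)
  have L0: "L > 0" using Lpos by (simp add: L_def)
  have Ll: "L \<le> l"
  proof -
    have "L = l - ln l" using lpos nn100 by (simp add: L_def \<Lambda>_def l_def ln_div)
    moreover have "ln l \<ge> 0" using lpos by simp
    ultimately show ?thesis by simp
  qed
  have ll: "l \<le> l ^ 2" using lpos by (simp add: power2_eq_square)
  have Lsmall: "L / nn \<le> 1 / 100" using Ll ll lsq' nn100 by (simp add: field_simps)
  have LL: "L * L / nn \<le> 1 / 100"
  proof -
    have "L * L \<le> l ^ 2" using Ll L0 by (simp add: power2_eq_square mult_mono)
    then show ?thesis using lsq' nn100 by (simp add: field_simps)
  qed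
  define p where "p = pval n r"
  have p_eq: "p = (rr - 1) / rr * L / nn" by (simp add: p_def pval_def rr_def L_def \<Lambda>_def l_def nn_def)
  have rfrac: "0 < (rr - 1) / rr" "(rr - 1) / rr \<le> 1" using rr2 by auto
  have ppos: "p > 0"
  proof -
    have "0 < (rr - 1) / rr * L / nn" using rfrac L0 nn100 rr2 by (intro divide_pos_pos mult_pos_pos) auto
    then show ?thesis using p_eq by simp
  qed
  have ple: "p \<le> L / nn"
  proof -
    have "p = (rr - 1) / rr * (L / nn)" using p_eq by simp
    also have "\<dots> \<le> 1 * (L / nn)" using rfrac L0 nn100 by (intro mult_right_mono) auto
    finally show ?thesis by simp
  qed
  have psmall: "p \<le> 1 / 100" using ple Lsmall by linarith
  show ok: "okp n r" using r2 ppos psmall by (simp add: okp_def p_def)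
  define q where "q = qq n r"
  define b where "b = bb n r"
  define D where "D = DD n r"
  have q_eq: "q = L / (rr * nn)" using rr2 nn100 by (simp add: q_def qq_def p_def[symmetric] p_eq rr_def field_simps)
  have qpos: "q > 0" using q_eq L0 rr2 nn100 by simp
  have qle: "q \<le> p"
  proof -
    have "q = p / (rr - 1)" by (simp add: q_def qq_def p_def rr_def)
    also have "\<dots> \<le> p / 1" using rr2 ppos by (intro divide_left_mono) auto
    finally show ?thesis by simp
  qed
  have b_eq: "b = (1 - p) / rr" by (simp add: b_def bb_def p_def rr_def)
  have D_eq: "rr * D = 1 + q"
  proof -
    have "D = (1 - p) / rr + p / (rr - 1)" by (simp add: D_def DD_def bb_def qq_def p_def rr_def)
    then have "rr * D = (1 - p) + rr * p / (rr - 1)" using rr2 by (simp add: field_simps)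
    also have "rr * p / (rr - 1) = p + p / (rr - 1)" using rr2 by (simp add: field_simps)
    finally show ?thesis by (simp add: q_def qq_def p_def rr_def)
  qed
  have bpos: "b > 0" using b_eq psmall rr2 by simp
  have Dpos: "D > 0"
  proof -
    have "0 < rr * D" using D_eq qpos by simp
    then show ?thesis using rr2 zero_less_mult_pos[of rr D] by simp
  qed
  have rDge: "rr * D \<ge> 1" using D_eq qpos by simp
  have nq: "nn * q = L / rr" using q_eq nn100 by (simp add: field_simps)
  have np: "nn * p = (rr - 1) / rr * L" using p_eq nn100 rr2 by (simp add: field_simps)
  have nqb: "nn * q / b = L / (1 - p)"
  proof -
    have a: "nn * q * rr = L" using q_eq nn100 rr2 by (simp add: field_simps)
    have p1: "1 - p > 0" using psmall by simp
    have "nn * q / b = nn * q * rr / (1 - p)" using p1 rr2 by (simp add: b_eq field_simps)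
    then show ?thesis using a by simp
  qed
  have powr_eq: "\<Lambda> powr ((rr - 1) / rr) = exp ((rr - 1) / rr * L)"
    using Lpos by (simp add: powr_def L_def)
  have Mb': "M / rr ^ (n - 1) \<le> 0.01 * exp ((rr - 1) / rr * L)"
  proof -
    have e: "(real n / ln (real n)) powr ((real r - 1) / real r) = exp ((rr - 1) / rr * L)"
      using powr_eq by (simp add: \<Lambda>_def l_def nn_def rr_def)
    have "M \<le> 0.01 * exp ((rr - 1) / rr * L) * rr ^ (n - 1)" using Mb unfolding e rr_def .
    moreover have "rr ^ (n - 1) > 0" using rr2 by simp
    ultimately show ?thesis by (simp add: pos_divide_le_eq)
  qed
  have rDn: "(rr * D) ^ n \<le> exp (L / rr)"
  proof -
    have "(rr * D) ^ n = (1 + q) ^ n" using D_eq by simp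
    also have "\<dots> \<le> exp q ^ n" using qpos by (intro power_mono) auto
    also have "\<dots> = exp (nn * q)" by (simp add: nn_def exp_of_nat_mult[symmetric])
    finally show ?thesis using nq by simp
  qed
  define X where "X = (1 - p) * exp (q / b)"
  have Xge: "X \<ge> 1 - p" using qpos bpos psmall by (simp add: X_def)
  have Xn: "X ^ n \<le> exp (L / (1 - p) - (rr - 1) / rr * L)"
  proof -
    have "(1 - p) ^ n \<le> exp (- p) ^ n" using psmall
      by (intro power_mono) (auto simp: exp_ge_add_one_self[of "-p", simplified])
    also have "\<dots> = exp (- (nn * p))" by (simp add: nn_def exp_of_nat_mult[symmetric])
    finally have a: "(1 - p) ^ n \<le> exp (- (nn * p))" .
    have "exp (q / b) ^ n = exp (nn * q / b)" by (simp add: nn_def exp_of_nat_mult[symmetric])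
    then have "X ^ n = (1 - p) ^ n * exp (nn * q / b)" by (simp add: X_def power_mult_distrib)
    also have "\<dots> \<le> exp (- (nn * p)) * exp (nn * q / b)" using a by (intro mult_right_mono) auto
    also have "\<dots> = exp (L / (1 - p) - (rr - 1) / rr * L)" using np nqb by (simp add: exp_add[symmetric])
    finally show ?thesis .
  qed

  have n2: "n \<ge> 2" using n100 by simp
  have rrpos: "rr > 0" using rr2 by simp
  define T1 where "T1 = M * D ^ (n - 2) * q"
  define T0 where "T0 = nn * M * b ^ (n - 1) * exp (real (n - 1) * q / b) * D / real (n - 2)"
  have T1eq: "T1 = (M / rr ^ (n - 1)) * (rr * D) ^ n * (q / (rr * D ^ 2))"
  proof -
    have a: "D ^ n = D ^ (n - 2) * D ^ 2"
    proof -
      have "n = (n - 2) + 2" using n2 by simp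
      then show ?thesis by (metis power_add)
    qed
    have b: "rr ^ n = rr ^ (n - 1) * rr" using n2 by (metis Suc_diff_1 order_less_le_trans pos2 power_Suc2)
    show ?thesis unfolding T1_def power_mult_distrib a b using rrpos Dpos by (simp add: field_simps)
  qed
  have T1le: "T1 \<le> 1 / 100"
  proof -
    have qr: "q / (rr * D ^ 2) \<le> q * rr"
    proof -
      have "1 \<le> (rr * D) ^ 2" using rDge by (simp add: one_le_power)
      then have "1 / (rr * D ^ 2) \<le> rr" using rrpos Dpos by (simp add: field_simps power2_eq_square)
      then show ?thesis using qpos by (simp add: mult_left_mono divide_inverse mult.commute)
    qed
    have "T1 \<le> (0.01 * exp ((rr - 1) / rr * L)) * exp (L / rr) * (q * rr)"
      unfolding T1eq using Mb' rDn qr qpos rrpos Dpos M0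
      by (intro mult_mono) auto
    also have "\<dots> = 0.01 * exp L * (q * rr)"
    proof -
      have "(rr - 1) / rr * L + L / rr = L" using rrpos by (simp add: field_simps)
      then show ?thesis by (simp add: exp_add[symmetric])
    qed
    also have "exp L = \<Lambda>" using Lpos by (simp add: L_def)
    also have "q * rr = L / nn" using q_eq rrpos by simp
    also have "0.01 * \<Lambda> * (L / nn) = 0.01 * (L / l)" using nn100 lpos by (simp add: \<Lambda>_def)
    also have "\<dots> \<le> 0.01 * 1" using Ll lpos by simp
    finally show ?thesis by simp
  qed
  have T1pos: "T1 \<ge> 0" using M0 Dpos qpos by (simp add: T1_def)
  have Xpos: "X > 0" using psmall by (simp add: X_def)
  have T0eq: "T0 = (M / rr ^ (n - 1)) * X ^ (n - 1) * (nn * D / real (n - 2))"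
  proof -
    have "b ^ (n - 1) * exp (real (n - 1) * q / b) = (b * exp (q / b)) ^ (n - 1)"
      by (simp add: power_mult_distrib exp_of_nat_mult[symmetric])
    also have "b * exp (q / b) = X / rr" using rrpos by (simp add: X_def b_eq)
    finally have e: "b ^ (n - 1) * exp (real (n - 1) * q / b) = X ^ (n - 1) / rr ^ (n - 1)"
      by (simp add: power_divide)
    show ?thesis unfolding T0_def using e by (simp add: field_simps)
  qed
  have Xn1: "X ^ (n - 1) \<le> X ^ n / (1 - p)"
  proof -
    have "X ^ n = X ^ (n - 1) * X" using n2 by (metis Suc_diff_1 order_less_le_trans pos2 power_Suc2)
    then have e: "X ^ n / (1 - p) = X ^ (n - 1) * (X / (1 - p))" by (simp add: times_divide_eq_right)
    have g1: "X / (1 - p) \<ge> 1" using Xge psmall by simp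
    have g2: "X ^ (n - 1) \<ge> 0" using Xpos by simp
    have "X ^ (n - 1) = X ^ (n - 1) * 1" by simp
    also have "\<dots> \<le> X ^ (n - 1) * (X / (1 - p))" using g1 g2 by (rule mult_left_mono)
    also have "\<dots> = X ^ n / (1 - p)" using e by (rule sym)
    finally show ?thesis .
  qed
  have T0le: "T0 \<le> 0.021 * \<Lambda> / rr"
  proof -
    have p1: "1 - p > 0" using psmall by simp
    have n2pos: "real (n - 2) > 0" using n100 by simp
    have fac: "nn * D / real (n - 2) \<ge> 0" using Dpos nn100 n2pos by simp
    have "T0 \<le> (0.01 * exp ((rr - 1) / rr * L)) * (exp (L / (1 - p) - (rr - 1) / rr * L) / (1 - p)) * (nn * D / real (n - 2))"
      unfolding T0eq
    proof (intro mult_right_mono[OF _ fac] mult_mono Mb')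
      show "X ^ (n - 1) \<le> exp (L / (1 - p) - (rr - 1) / rr * L) / (1 - p)"
        using Xn1 Xn p1 by (meson divide_right_mono less_eq_real_def order_trans)
    qed (use Xpos rr2 in auto)
    also have "\<dots> = 0.01 * exp (L / (1 - p)) / (1 - p) * (nn * D / real (n - 2))"
      by (simp add: exp_diff)
    finally have A: "T0 \<le> 0.01 * exp (L / (1 - p)) / (1 - p) * (nn * D / real (n - 2))" .
    have B1: "exp (L / (1 - p)) = \<Lambda> * exp (L * p / (1 - p))"
    proof -
      have "L / (1 - p) = L + L * p / (1 - p)" using p1 by (simp add: field_simps)
      then show ?thesis using Lpos by (simp add: exp_add L_def)
    qed
    have B2: "exp (L * p / (1 - p)) \<le> 2"
    proof -
      have "L * p \<le> L * (L / nn)" using L0 by (intro mult_left_mono[OF ple]) simp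
      also have "\<dots> = L * L / nn" by simp
      also have "\<dots> \<le> 1 / 100" by (rule LL)
      finally have a: "L * p \<le> 1 / 100" .
      have "L * p / (1 - p) \<le> (1 / 100) / (99 / 100)"
        using a p1 psmall L0 ppos by (intro frac_le) auto
      also have "\<dots> \<le> 1 / 2" by simp
      finally have "exp (L * p / (1 - p)) \<le> exp (1 / 2)" by simp
      then show ?thesis using exp_half_le2 by linarith
    qed
    have B: "exp (L / (1 - p)) \<le> \<Lambda> * 2" unfolding B1 using B2 Lpos by simp
    have C: "nn * D / real (n - 2) = (1 + q) / rr * (nn / (nn - 2))"
    proof -
      have "D = (1 + q) / rr" using D_eq rrpos by (simp add: field_simps)
      moreover have "real (n - 2) = nn - 2" using n2 by (simp add: nn_def of_nat_diff)
      ultimately show ?thesis by simp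
    qed
    have "0.01 * exp (L / (1 - p)) / (1 - p) * (nn * D / real (n - 2)) \<le> 0.01 * (\<Lambda> * 2) / (1 - p) * (nn * D / real (n - 2))"
      using B p1 fac by (intro mult_right_mono divide_right_mono) auto
    with A C have T0b: "T0 \<le> 0.01 * (\<Lambda> * 2) / (1 - p) * ((1 + q) / rr * (nn / (nn - 2)))" by simp
    have f1: "1 / (1 - p) \<le> 100 / 99" using psmall p1 by (simp add: field_simps)
    have f2: "1 + q \<le> 101 / 100" using qle psmall by simp
    have f3: "nn / (nn - 2) \<le> 100 / 98" using nn100 by (simp add: field_simps)
    have "0.01 * (\<Lambda> * 2) / (1 - p) * ((1 + q) / rr * (nn / (nn - 2)))
        = 0.02 * (\<Lambda> / rr) * (1 / (1 - p)) * (1 + q) * (nn / (nn - 2))" by (simp add: field_simps)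
    also have "\<dots> \<le> 0.02 * (\<Lambda> / rr) * (100 / 99) * (101 / 100) * (100 / 98)"
      using f1 f2 f3 Lpos rrpos qpos p1 nn100
      by (intro mult_mono mult_left_mono) (auto simp: field_simps)
    also have "\<dots> \<le> 0.021 * \<Lambda> / rr" using Lpos rrpos by (simp add: field_simps)
    finally show ?thesis using T0b by linarith
  qed
  have termeq: "real n * M ^ (k + 1) * Bk n r k = T0 * T1 ^ k" for k
    by (simp add: Bk_def T0_def T1_def nn_def q_def b_def D_def power_mult power_mult_distrib field_simps flip: power_mult)
  have T0pos: "T0 \<ge> 0" using M0 bpos Dpos nn100 by (simp add: T0_def)
  have "(\<Sum>k<i. real n * M ^ (k + 1) * Bk n r k) = T0 * (\<Sum>k<i. T1 ^ k)"
    unfolding sum_distrib_left using termeq by (intro sum.cong) auto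
  also have "(\<Sum>k<i. T1 ^ k) \<le> (\<Sum>k<i. (1 / 100) ^ k)"
    using T1pos T1le by (intro sum_mono power_mono) auto
  also have "(\<Sum>k<i. (1 / 100 :: real) ^ k) \<le> 100 / 99"
  proof -
    have "(\<Sum>k<i. (1 / 100 :: real) ^ k) = (1 - (1 / 100) ^ i) / (1 - 1 / 100)" by (simp add: sum_gp_strict)
    also have "\<dots> \<le> 1 / (1 - 1 / 100)" by (intro divide_right_mono) auto
    finally show ?thesis by simp
  qed
  finally have "(\<Sum>k<i. real n * M ^ (k + 1) * Bk n r k) \<le> T0 * (100 / 99)"
    using T0pos by (simp add: mult_left_mono)
  also have "\<dots> \<le> 0.021 * \<Lambda> / rr * (100 / 99)" using T0le by simp
  also have "\<dots> \<le> 0.04 * exp 1 * \<Lambda> / rr"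
  proof -
    have "exp 1 \<ge> (2::real)" using exp_ge_add_one_self[of 1] by simp
    then show ?thesis using Lpos rrpos by (simp add: field_simps)
  qed
  also have "\<dots> = 0.04 * exp 1 * real n / (real r * ln (real n))"
    by (simp add: \<Lambda>_def nn_def l_def rr_def)
  finally show "(\<Sum>k<i. real n * M ^ (k + 1) * Bk n r k) \<le> 0.04 * exp 1 * real n / (real r * ln (real n))" .
qed

lemma uu_restrict: "j \<le> k \<Longrightarrow> uu (restrict es {0..k}) v j = uu es v j"
  by (cases j) (auto simp: uu_def)

lemma chainev_restrict: "chainev n r E i k (restrict es {0..k}) v \<sigma> = chainev n r E i k es v \<sigma>"
proof -
  have a: "\<And>j. j \<le> k \<Longrightarrow> restrict es {0..k} j = es j" by simp
  have b: "\<And>j. j \<le> k \<Longrightarrow> uu (restrict es {0..k}) v j = uu es v j" by (rule uu_restrict)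
  show ?thesis unfolding chainev_def
    using a b by (smt (verit) Suc_leI order_refl less_imp_le)
qed

lemma Xcnt_meas:
  assumes V: "finite V" and E: "finite E" "\<forall>e\<in>E. finite e"
  shows "(\<lambda>\<sigma>. real (Xcnt n r V E i \<sigma>)) \<in> borel_measurable (PiM V (\<lambda>_. M0))"
proof -
  have eq: "real (Xcnt n r V E i \<sigma>) = (\<Sum>v\<in>V. if \<sigma> v \<in> SmallDelta n r i \<and> C0 n r V E \<sigma> v = i + 1 then 1 else 0)" for \<sigma>
    unfolding Xcnt_def using V by (simp add: sum.If_cases Int_def)
  note [measurable] = alg_meas[OF E] pred_small
  show ?thesis unfolding eq C0_def by measurable
qed

lemma exp_bound:
  fixes V :: "'a set" and E :: "'a set set"
  assumes ok: "okp n r" and n3: "3 \<le> n" and V: "finite V" and EV: "\<forall>e\<in>E. e \<subseteq> V \<and> card e = n"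
    and i1: "1 \<le> i" and ir: "i < r"
  shows "(\<integral>\<^sup>+\<sigma>. ennreal (real (Xcnt n r V E i \<sigma>)) \<partial>PiM V (\<lambda>_. M0))
           \<le> ennreal (\<Sum>k<i. real n * real (card E) ^ (k + 1) * Bk n r k)"
proof -
  define PM where "PM = PiM V (\<lambda>_. M0)"
  have Efin: "finite E" using EV V by (metis Pow_iff finite_Pow_iff finite_subset subsetI)
  have efin: "\<forall>e\<in>E. finite e" using EV V finite_subset by blast
  define Q where "Q k es v F \<longleftrightarrow> F \<in> borel_measurable PM \<and>
           (\<forall>\<sigma>\<in>space PM. chainev n r E i k es v \<sigma> \<longrightarrow> 1 \<le> F \<sigma>) \<and>
           (\<integral>\<^sup>+\<sigma>. F \<sigma> \<partial>PM) \<le> ennreal (Bk n r k)" for k es v and F :: "('a \<Rightarrow> real) \<Rightarrow> ennreal"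
  have exF: "\<exists>F. Q k es v F" if "k < i" for k es v
    using chain_bound[OF ok n3 V EV i1 ir that, of es v] unfolding Q_def PM_def by blast
  define Fam where "Fam k es v = (SOME F. Q k es v F)" for k es v
  have FamQ: "Q k es v (Fam k es v)" if "k < i" for k es v
    unfolding Fam_def using exF[OF that] by (rule someI_ex)
  define PE where "PE k = PiE {0..k} (\<lambda>_. E)" for k :: nat
  have PEfin: "finite (PE k)" for k unfolding PE_def using Efin by (intro finite_PiE) auto
  define G where "G v \<sigma> = (\<Sum>k<i. \<Sum>es\<in>PE k. if v \<in> es 0 then Fam k es v \<sigma> else 0)" for v \<sigma>
  have pt: "ennreal (real (Xcnt n r V E i \<sigma>)) \<le> (\<Sum>k<i. \<Sum>es\<in>PE k. \<Sum>v\<in>es 0. Fam k es v \<sigma>)"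
    if \<sigma>: "\<sigma> \<in> space PM" for \<sigma>
  proof -
    define A where "A = {v \<in> V. \<sigma> v \<in> SmallDelta n r i \<and> C0 n r V E \<sigma> v = i + 1}"
    have AV: "A \<subseteq> V" by (auto simp: A_def)
    have G1: "1 \<le> G v \<sigma>" if "v \<in> A" for v
    proof -
      have vs: "\<sigma> v \<in> SmallDelta n r i" and col: "alg1_iter n r E \<sigma> (Suc (card V)) v = i + 1"
        using that by (auto simp: A_def C0_def)
      obtain k es where k: "k < i" and ch: "chainev n r E i k es v \<sigma>"
        using witness[OF ok efin i1 ir vs col] by blast
      define es' where "es' = restrict es {0..k}"
      have ch': "chainev n r E i k es' v \<sigma>" using ch by (simp add: es'_def chainev_restrict)
      have es'PE: "es' \<in> PE k"
        using ch unfolding es'_def PE_def chainev_def by auto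
      have v0: "v \<in> es' 0" using chain_first_inter(1)[OF ch'] .
      have "1 \<le> Fam k es' v \<sigma>" using FamQ[OF k] ch' \<sigma> unfolding Q_def by blast
      also have "\<dots> = (if v \<in> es' 0 then Fam k es' v \<sigma> else 0)" using v0 by simp
      also have "\<dots> \<le> (\<Sum>es\<in>PE k. if v \<in> es 0 then Fam k es v \<sigma> else 0)"
        by (rule member_le_sum[OF es'PE _ PEfin]) simp
      also have "\<dots> \<le> G v \<sigma>" unfolding G_def
        by (rule member_le_sum[of k "{..<i}"]) (use k in auto)
      finally show ?thesis .
    qed
    have "ennreal (real (Xcnt n r V E i \<sigma>)) = (\<Sum>v\<in>A. 1)"
      by (simp add: Xcnt_def A_def ennreal_of_nat_eq_real_of_nat)
    also have "\<dots> \<le> (\<Sum>v\<in>A. G v \<sigma>)" using G1 by (intro sum_mono) auto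
    also have "\<dots> \<le> (\<Sum>v\<in>V. G v \<sigma>)" using AV V by (intro sum_mono2) auto
    also have "\<dots> = (\<Sum>k<i. \<Sum>es\<in>PE k. \<Sum>v\<in>V. if v \<in> es 0 then Fam k es v \<sigma> else 0)"
      unfolding G_def by (subst sum.swap) (simp add: sum.swap[of _ V])
    also have "\<dots> = (\<Sum>k<i. \<Sum>es\<in>PE k. \<Sum>v\<in>es 0. Fam k es v \<sigma>)"
    proof (rule sum.cong[OF refl], rule sum.cong[OF refl])
      fix k es assume "k \<in> {..<i}" "es \<in> PE k"
      then have "es 0 \<in> E" by (auto simp: PE_def PiE_iff)
      then have "es 0 \<subseteq> V" using EV by blast
      then show "(\<Sum>v\<in>V. if v \<in> es 0 then Fam k es v \<sigma> else 0) = (\<Sum>v\<in>es 0. Fam k es v \<sigma>)"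
        using V by (simp add: sum.If_cases Int_absorb1 Int_commute)
    qed
    finally show ?thesis .
  qed
  have Fm: "Fam k es v \<in> borel_measurable PM" if "k < i" for k es v using FamQ[OF that] by (simp add: Q_def)
  have "(\<integral>\<^sup>+\<sigma>. ennreal (real (Xcnt n r V E i \<sigma>)) \<partial>PM) \<le> (\<integral>\<^sup>+\<sigma>. (\<Sum>k<i. \<Sum>es\<in>PE k. \<Sum>v\<in>es 0. Fam k es v \<sigma>) \<partial>PM)"
    by (intro nn_integral_mono pt)
  also have "\<dots> = (\<Sum>k<i. \<Sum>es\<in>PE k. \<Sum>v\<in>es 0. (\<integral>\<^sup>+\<sigma>. Fam k es v \<sigma> \<partial>PM))"
  proof -
    have m2: "(\<lambda>\<sigma>. \<Sum>v\<in>es 0. Fam k es v \<sigma>) \<in> borel_measurable PM" if "k < i" for k es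
      using Fm[OF that] by (intro borel_measurable_sum) auto
    have m1: "(\<lambda>\<sigma>. \<Sum>es\<in>PE k. \<Sum>v\<in>es 0. Fam k es v \<sigma>) \<in> borel_measurable PM" if "k < i" for k
      using m2[OF that] Fm[OF that] by (intro borel_measurable_sum) auto
    have "(\<integral>\<^sup>+\<sigma>. (\<Sum>k<i. \<Sum>es\<in>PE k. \<Sum>v\<in>es 0. Fam k es v \<sigma>) \<partial>PM)
        = (\<Sum>k<i. (\<integral>\<^sup>+\<sigma>. (\<Sum>es\<in>PE k. \<Sum>v\<in>es 0. Fam k es v \<sigma>) \<partial>PM))"
      using m1 by (intro nn_integral_sum) auto
    also have "\<dots> = (\<Sum>k<i. \<Sum>es\<in>PE k. (\<integral>\<^sup>+\<sigma>. (\<Sum>v\<in>es 0. Fam k es v \<sigma>) \<partial>PM))"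
      using m2 by (intro sum.cong refl nn_integral_sum) auto
    also have "\<dots> = (\<Sum>k<i. \<Sum>es\<in>PE k. \<Sum>v\<in>es 0. (\<integral>\<^sup>+\<sigma>. Fam k es v \<sigma> \<partial>PM))"
      using Fm by (intro sum.cong refl nn_integral_sum) auto
    finally show ?thesis .
  qed
  also have "\<dots> \<le> (\<Sum>k<i. \<Sum>es\<in>PE k. \<Sum>v\<in>es 0. ennreal (Bk n r k))"
    using FamQ unfolding Q_def by (intro sum_mono) auto
  also have "\<dots> = (\<Sum>k<i. ennreal (real n * real (card E) ^ (k + 1) * Bk n r k))"
  proof (intro sum.cong refl)
    fix k assume "k \<in> {..<i}"
    have "(\<Sum>es\<in>PE k. \<Sum>v\<in>es 0. ennreal (Bk n r k)) = (\<Sum>es\<in>PE k. ennreal (real n * Bk n r k))"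
    proof (intro sum.cong refl)
      fix es assume "es \<in> PE k"
      then have "es 0 \<in> E" by (auto simp: PE_def PiE_iff)
      then have "card (es 0) = n" using EV by blast
      moreover have "Bk n r k \<ge> 0" using okp_pos[OF ok] n3 by (simp add: Bk_def DD_def)
      ultimately show "(\<Sum>v\<in>es 0. ennreal (Bk n r k)) = ennreal (real n * Bk n r k)"
        by (simp add: ennreal_mult ennreal_of_nat_eq_real_of_nat)
    qed
    also have "\<dots> = of_nat (card (PE k)) * ennreal (real n * Bk n r k)" by simp
    also have "card (PE k) = card E ^ (k + 1)" unfolding PE_def by (simp add: card_PiE)
    also have "of_nat (card E ^ (k + 1)) * ennreal (real n * Bk n r k)
        = ennreal (real (card E ^ (k + 1)) * (real n * Bk n r k))"
    proof -
      have "Bk n r k \<ge> 0" using okp_pos[OF ok] n3 by (simp add: Bk_def DD_def)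
      then show ?thesis by (simp add: ennreal_of_nat_eq_real_of_nat ennreal_mult)
    qed
    also have "real (card E ^ (k + 1)) * (real n * Bk n r k) = real n * real (card E) ^ (k + 1) * Bk n r k"
      by (simp add: mult_ac)
    finally show "(\<Sum>es\<in>PE k. \<Sum>v\<in>es 0. ennreal (Bk n r k)) = ennreal (real n * real (card E) ^ (k + 1) * Bk n r k)" .
  qed
  also have "\<dots> = ennreal (\<Sum>k<i. real n * real (card E) ^ (k + 1) * Bk n r k)"
    using okp_pos[OF ok] n3 by (intro sum_ennreal) (simp add: Bk_def DD_def)
  finally show ?thesis unfolding PM_def .
qed

lemma eventually_N: "\<exists>N::nat. \<forall>n\<ge>N. 100 \<le> n \<and> 1 \<le> ln (real n) \<and> ln (real n) ^ 2 \<le> real n / 100"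
proof -
  have a: "eventually (\<lambda>n::nat. 1 \<le> ln (real n)) sequentially" by real_asymp
  have b: "eventually (\<lambda>n::nat. ln (real n) ^ 2 \<le> real n / 100) sequentially" by real_asymp
  have c: "eventually (\<lambda>n::nat. 100 \<le> n) sequentially" by (rule eventually_ge_at_top)
  have "eventually (\<lambda>n::nat. 100 \<le> n \<and> 1 \<le> ln (real n) \<and> ln (real n) ^ 2 \<le> real n / 100) sequentially"
    using a b c by eventually_elim auto
  then show ?thesis by (simp add: eventually_sequentially)
qed

theorem lemma4:
  "\<exists>N::nat. \<forall>n\<ge>N. \<forall>(r::nat) (V::'a set) (E::'a set set).
     2 \<le> r \<and> real r < ln (real n) powr (1/5) \<and> finite V \<and>
     (\<forall>e\<in>E. e \<subseteq> V \<and> card e = n) \<and>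
     real (card E) \<le> 0.01 * (real n / ln (real n)) powr ((real r - 1) / real r) * real r ^ (n - 1)
     \<longrightarrow>
     (\<forall>i\<in>{1..r-1}.
        (\<lambda>\<sigma>. real (Xcnt n r V E i \<sigma>)) \<in> borel_measurable (weight_space V) \<and>
        integral\<^sup>L (weight_space V) (\<lambda>\<sigma>. real (Xcnt n r V E i \<sigma>))
          \<le> 0.04 * exp 1 * real n / (real r * ln (real n))) \<and>
     measure (weight_space V)
       {\<sigma> \<in> space (weight_space V). \<forall>i\<in>{1..r-1}. real (Xcnt n r V E i \<sigma>) \<le> real n / ln (real n)}
       \<ge> 1 - 0.04 * exp 1"
proof -
  obtain N :: nat where N: "\<And>n. n \<ge> N \<Longrightarrow> 100 \<le> n \<and> 1 \<le> ln (real n) \<and> ln (real n) ^ 2 \<le> real n / 100"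
    using eventually_N by blast
  show ?thesis
  proof (intro exI allI impI)
    fix n r :: nat and V :: "'a set" and E :: "'a set set"
    assume nN: "N \<le> n"
    assume H: "2 \<le> r \<and> real r < ln (real n) powr (1/5) \<and> finite V \<and>
     (\<forall>e\<in>E. e \<subseteq> V \<and> card e = n) \<and>
     real (card E) \<le> 0.01 * (real n / ln (real n)) powr ((real r - 1) / real r) * real r ^ (n - 1)"
    have r2: "2 \<le> r" and V: "finite V" and EV: "\<forall>e\<in>E. e \<subseteq> V \<and> card e = n"
      and Eb: "real (card E) \<le> 0.01 * (real n / ln (real n)) powr ((real r - 1) / real r) * real r ^ (n - 1)"
      using H by auto
    have n100: "100 \<le> n" and l1: "1 \<le> ln (real n)" and lsq: "ln (real n) ^ 2 \<le> real n / 100"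
      using N[OF nN] by auto
    note num = numeric[OF r2 n100 l1 lsq _ Eb]
    have ok: "okp n r" using num(1) by simp
    have n3: "3 \<le> n" using n100 by simp
    have Efin: "finite E" using EV V by (metis Pow_iff finite_Pow_iff finite_subset subsetI)
    have efin: "\<forall>e\<in>E. finite e" using EV V finite_subset by blast
    define PM where "PM = weight_space V"
    have PM_eq: "PM = PiM V (\<lambda>_. M0)" by (simp add: PM_def weight_space_def)
    interpret P: prob_space PM unfolding PM_eq by (rule prob_PiM0)
    define c where "c = 0.04 * exp 1 * real n / (real r * ln (real n))"
    define \<Lambda> where "\<Lambda> = real n / ln (real n)"
    have Lpos: "\<Lambda> > 0" using l1 n100 by (simp add: \<Lambda>_def)
    have meas: "(\<lambda>\<sigma>. real (Xcnt n r V E i \<sigma>)) \<in> borel_measurable PM" for i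
      unfolding PM_eq by (rule Xcnt_meas[OF V Efin efin])
    have intb: "integral\<^sup>L PM (\<lambda>\<sigma>. real (Xcnt n r V E i \<sigma>)) \<le> c" if i: "i \<in> {1..r-1}" for i
    proof -
      have i1: "1 \<le> i" and ir: "i < r" using i r2 by auto
      have nn: "(\<integral>\<^sup>+\<sigma>. ennreal (real (Xcnt n r V E i \<sigma>)) \<partial>PM)
           \<le> ennreal (\<Sum>k<i. real n * real (card E) ^ (k + 1) * Bk n r k)"
        unfolding PM_eq by (rule exp_bound[OF ok n3 V EV i1 ir])
      have S0: "(\<Sum>k<i. real n * real (card E) ^ (k + 1) * Bk n r k) \<ge> 0"
        using okp_pos[OF ok] n3 by (intro sum_nonneg) (simp add: Bk_def DD_def)
      have "integral\<^sup>L PM (\<lambda>\<sigma>. real (Xcnt n r V E i \<sigma>)) = enn2real (\<integral>\<^sup>+\<sigma>. ennreal (real (Xcnt n r V E i \<sigma>)) \<partial>PM)"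
        by (rule integral_eq_nn_integral[OF meas]) auto
      also have "\<dots> \<le> enn2real (ennreal (\<Sum>k<i. real n * real (card E) ^ (k + 1) * Bk n r k))"
        by (rule enn2real_mono[OF nn]) simp
      also have "\<dots> = (\<Sum>k<i. real n * real (card E) ^ (k + 1) * Bk n r k)" using S0 by simp
      also have "\<dots> \<le> c" unfolding c_def by (rule num(2)) simp
      finally show ?thesis .
    qed
    have Xle: "real (Xcnt n r V E i \<sigma>) \<le> real (card V)" for i \<sigma>
      unfolding Xcnt_def using V by (simp add: card_mono)
    have integ: "integrable PM (\<lambda>\<sigma>. real (Xcnt n r V E i \<sigma>))" for i
      using Xle by (intro P.integrable_const_bound[where B="real (card V)"] meas) auto
    define I where "I = {1..r-1}"
    define U where "U = (\<Union>i\<in>I. {\<sigma> \<in> space PM. \<Lambda> \<le> real (Xcnt n r V E i \<sigma>)})"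
    have Usets: "{\<sigma> \<in> space PM. \<Lambda> \<le> real (Xcnt n r V E i \<sigma>)} \<in> sets PM" for i
      using meas[of i] by measurable
    have U: "U \<in> sets PM" unfolding U_def I_def using Usets by auto
    have "P.prob U \<le> (\<Sum>i\<in>I. P.prob {\<sigma> \<in> space PM. \<Lambda> \<le> real (Xcnt n r V E i \<sigma>)})"
      unfolding U_def by (rule P.finite_measure_subadditive_finite) (use Usets in \<open>auto simp: I_def\<close>)
    also have "\<dots> \<le> (\<Sum>i\<in>I. c / \<Lambda>)"
    proof (rule sum_mono)
      fix i assume i: "i \<in> I"
      have "P.prob {\<sigma> \<in> space PM. \<Lambda> \<le> real (Xcnt n r V E i \<sigma>)} \<le> integral\<^sup>L PM (\<lambda>\<sigma>. real (Xcnt n r V E i \<sigma>)) / \<Lambda>"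
        by (rule integral_Markov_inequality_measure[OF integ _ _ Lpos, of "space PM"]) auto
      also have "\<dots> \<le> c / \<Lambda>" using intb[of i] i Lpos by (simp add: I_def divide_right_mono)
      finally show "P.prob {\<sigma> \<in> space PM. \<Lambda> \<le> real (Xcnt n r V E i \<sigma>)} \<le> c / \<Lambda>" .
    qed
    also have "\<dots> = real (r - 1) * (c / \<Lambda>)" by (simp add: I_def)
    also have "\<dots> = 0.04 * exp 1 * (real (r - 1) / real r)"
      using l1 n100 r2 by (simp add: c_def \<Lambda>_def field_simps)
    also have "\<dots> \<le> 0.04 * exp 1 * 1" using r2 by (intro mult_left_mono) auto
    finally have PU: "P.prob U \<le> 0.04 * exp 1" by simp
    have sub: "space PM - U \<subseteq> {\<sigma> \<in> space PM. \<forall>i\<in>{1..r-1}. real (Xcnt n r V E i \<sigma>) \<le> real n / ln (real n)}"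
      by (auto simp: U_def I_def \<Lambda>_def)
    have good: "{\<sigma> \<in> space PM. \<forall>i\<in>{1..r-1}. real (Xcnt n r V E i \<sigma>) \<le> real n / ln (real n)} \<in> sets PM"
    proof -
      have "{\<sigma> \<in> space PM. \<forall>i\<in>{1..r-1}. real (Xcnt n r V E i \<sigma>) \<le> real n / ln (real n)}
          = space PM - (\<Union>i\<in>I. {\<sigma> \<in> space PM. real n / ln (real n) < real (Xcnt n r V E i \<sigma>)})"
        by (auto simp: I_def not_le)
      also have "\<dots> \<in> sets PM"
        using meas by (intro sets.Diff sets.top sets.finite_UN) (auto simp: I_def)
      finally show ?thesis .
    qed
    have "1 - 0.04 * exp 1 \<le> 1 - P.prob U" using PU by simp
    also have "\<dots> = P.prob (space PM - U)" using P.prob_compl[OF U] by simp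
    also have "\<dots> \<le> P.prob {\<sigma> \<in> space PM. \<forall>i\<in>{1..r-1}. real (Xcnt n r V E i \<sigma>) \<le> real n / ln (real n)}"
      by (rule P.finite_measure_mono[OF sub good])
    finally have part2: "measure PM {\<sigma> \<in> space PM. \<forall>i\<in>{1..r-1}. real (Xcnt n r V E i \<sigma>) \<le> real n / ln (real n)}
       \<ge> 1 - 0.04 * exp 1" .
    show "(\<forall>i\<in>{1..r-1}.
        (\<lambda>\<sigma>. real (Xcnt n r V E i \<sigma>)) \<in> borel_measurable (weight_space V) \<and>
        integral\<^sup>L (weight_space V) (\<lambda>\<sigma>. real (Xcnt n r V E i \<sigma>))
          \<le> 0.04 * exp 1 * real n / (real r * ln (real n))) \<and>
     measure (weight_space V)
       {\<sigma> \<in> space (weight_space V). \<forall>i\<in>{1..r-1}. real (Xcnt n r V E i \<sigma>) \<le> real n / ln (real n)}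
       \<ge> 1 - 0.04 * exp 1"
      using meas intb part2 unfolding PM_def c_def by blast
  qed
qed

end
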